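(* Let $\mathcal{X}$ be finite, $T>0$, $\alpha>0$, $r:\mathcal{X}\to\mathbb{R}$, $Q^{\mathrm{pre}}(t)$ a pretrained CTMC generator, and $p_{\lim}$ an arbitrary (possibly non-degenerate) probability distribution on $\mathcal{X}$. Consider jointly optimizing, over all CTMC generators $Q$ and all initial distributions $P_0$ on $\mathcal{X}$ (fully nonparametric class), the objective $$J(Q,P_0)=\mathbb{E}_{x_0\sim P_0,\,x_{0:T}\sim P^{Q}}[r(x_T)]-\alpha\Big\{\mathbb{E}_{x_0\sim P_0,\,x_{0:T}\sim P^{Q}}\Big[\int_0^T\sum_{y\neq x_t}\Big\{Q^{\mathrm{pre}}_{x_t,y}(t)-Q_{x_t,y}(t)+Q_{x_t,y}(t)\log\frac{Q_{x_t,y}(t)}{Q^{\mathrm{pre}}_{x_t,y}(t)}\Big\}dt\Big]+\mathrm{KL}(P_0\,\|\,p_{\lim})\Big\}.$$ Let $(Q^{\star},P_0^{\star})$ be a maximizer. Then $P_0^{\star}(x)\propto\exp(V_0(x)/\alpha)\,p_{\lim}(x)$, where $V_t$ is the optimal value function, and the time-$T$ distribution of the CTMC with generator $Q^{\star}$ started from $P_0^{\star}$ is proportional to $\exp(r(x)/\alpha)\,p^{\mathrm{pre}}(x)$, where $p^{\mathrm{pre}}$ is the time-$T$ distribution of the CTMC with generator $Q^{\mathrm{pre}}$ started from $p_{\lim}$.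
   Context: A CTMC generator is a family $Q(t)=(Q_{x,y}(t))$ with $Q_{x,y}(t)\ge0$ for $x\neq y$ (rate from $x$ to $y$) and $Q_{x,x}(t)=-\sum_{y\neq x}Q_{x,y}(t)$; marginals obey $\frac{dp_t(x)}{dt}=\sum_{y\neq x}Q_{y,x}(t)p_t(y)-\sum_{y\neq x}Q_{x,y}(t)p_t(x)$. $P^{Q}$ denotes the law of the path of the CTMC with generator $Q$ given its initial state. The optimal value function is $$V_t(x)=\mathbb{E}_{x_{t:T}\sim P^{Q^{\star}}}\Big[r(x_T)-\alpha\int_t^T\sum_{y\neq x_s}\Big\{Q^{\star}_{x_s,y}(s)-Q^{\mathrm{pre}}_{x_s,y}(s)+Q^{\star}_{x_s,y}(s)\log\frac{Q^{\star}_{x_s,y}(s)}{Q^{\mathrm{pre}}_{x_s,y}(s)}\Big\}ds\;\Big|\;x_t=x\Big].$$ Generators are assumed regular enough (e.g. continuous in $t$) that Kolmogorov equations have unique solutions; $0\log(0/0)=0$. *)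

theory Defs
  imports "HOL-Analysis.Analysis"
begin

text \<open>A time-dependent rate matrix is
  Q :: real \<Rightarrow> 'x \<Rightarrow> 'x \<Rightarrow> real, where Q t x y is the rate from x to y at time t.\<close>

definition is_distr :: "('x::finite \<Rightarrow> real) \<Rightarrow> bool" where
  "is_distr p \<longleftrightarrow> (\<forall>x. 0 \<le> p x) \<and> (\<Sum>x\<in>UNIV. p x) = 1"

text \<open>CTMC generator on [0,T]: nonnegative off-diagonal rates, rows summing to zero,
  continuous in time (regularity making the Kolmogorov equations uniquely solvable).\<close>
definition is_generator :: "real \<Rightarrow> (real \<Rightarrow> 'x::finite \<Rightarrow> 'x \<Rightarrow> real) \<Rightarrow> bool" where
  "is_generator T Q \<longleftrightarrow>
     (\<forall>t\<in>{0..T}. \<forall>x y. x \<noteq> y \<longrightarrow> 0 \<le> Q t x y) \<and>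
     (\<forall>t\<in>{0..T}. \<forall>x. Q t x x = - (\<Sum>y\<in>UNIV - {x}. Q t x y)) \<and>
     (\<forall>x y. continuous_on {0..T} (\<lambda>t. Q t x y))"

text \<open>Marginal flow of the CTMC with generator Q on [a,b] started at time a from
  distribution p0: the (unique) solution of the Kolmogorov forward equation
  d/dt p_t(x) = sum_{y \<noteq> x} Q_{y,x}(t) p_t(y) - sum_{y \<noteq> x} Q_{x,y}(t) p_t(x),
  normalised to be 0 outside [a,b].\<close>
definition flow :: "real \<Rightarrow> real \<Rightarrow> (real \<Rightarrow> 'x::finite \<Rightarrow> 'x \<Rightarrow> real) \<Rightarrow> ('x \<Rightarrow> real)
                     \<Rightarrow> real \<Rightarrow> 'x \<Rightarrow> real" where
  "flow a b Q p0 = (THE p. p a = p0 \<and>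
      (\<forall>t\<in>{a..b}. \<forall>x. ((\<lambda>s. p s x) has_real_derivative
          ((\<Sum>y\<in>UNIV - {x}. Q t y x * p t y) - (\<Sum>y\<in>UNIV - {x}. Q t x y * p t x)))
          (at t within {a..b})) \<and>
      (\<forall>t. t \<notin> {a..b} \<longrightarrow> p t = (\<lambda>_. 0)))"

definition marginal :: "real \<Rightarrow> (real \<Rightarrow> 'x::finite \<Rightarrow> 'x \<Rightarrow> real) \<Rightarrow> ('x \<Rightarrow> real)
                        \<Rightarrow> real \<Rightarrow> 'x \<Rightarrow> real" where
  "marginal T Q P0 = flow 0 T Q P0"

text \<open>Transition probability P(x_s = z | x_t = x), for t \<le> s \<le> T.\<close>
definition trans :: "real \<Rightarrow> (real \<Rightarrow> 'x::finite \<Rightarrow> 'x \<Rightarrow> real) \<Rightarrow> real \<Rightarrow> 'x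
                     \<Rightarrow> real \<Rightarrow> 'x \<Rightarrow> real" where
  "trans T Q t x = flow t T Q (\<lambda>z. if z = x then 1 else 0)"

definition pen :: "(real \<Rightarrow> 'x::finite \<Rightarrow> 'x \<Rightarrow> real) \<Rightarrow> (real \<Rightarrow> 'x \<Rightarrow> 'x \<Rightarrow> real)
                   \<Rightarrow> real \<Rightarrow> 'x \<Rightarrow> real" where
  "pen Qpre Q t x = (\<Sum>y\<in>UNIV - {x}.
      Qpre t x y - Q t x y + (if Q t x y = 0 then 0 else Q t x y * ln (Q t x y / Qpre t x y)))"

definition KL :: "('x::finite \<Rightarrow> real) \<Rightarrow> ('x \<Rightarrow> real) \<Rightarrow> real" where
  "KL p q = (\<Sum>x\<in>UNIV. if p x = 0 then 0 else p x * ln (p x / q x))"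

text \<open>Pairs (Q, P0) for which the objective is finite (otherwise it equals -\<infinity>):
  Q a generator, P0 a distribution, absolute continuity w.r.t. p_lim and Qpre, and
  finite (integrable, nonnegative) expected path-KL penalty.\<close>
definition admissible :: "real \<Rightarrow> (real \<Rightarrow> 'x::finite \<Rightarrow> 'x \<Rightarrow> real) \<Rightarrow> ('x \<Rightarrow> real)
                          \<Rightarrow> (real \<Rightarrow> 'x \<Rightarrow> 'x \<Rightarrow> real) \<Rightarrow> ('x \<Rightarrow> real) \<Rightarrow> bool" where
  "admissible T Qpre plim Q P0 \<longleftrightarrow>
     is_generator T Q \<and> is_distr P0 \<and>
     (\<forall>x. plim x = 0 \<longrightarrow> P0 x = 0) \<and>
     (\<forall>t\<in>{0..T}. \<forall>x y. x \<noteq> y \<longrightarrow> Qpre t x y = 0 \<longrightarrow> Q t x y = 0) \<and>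
     (\<lambda>t. \<Sum>x\<in>UNIV. marginal T Q P0 t x * pen Qpre Q t x) integrable_on {0..T}"

text \<open>The objective J(Q,P0), with path expectations written through the marginals.\<close>
definition objective :: "real \<Rightarrow> real \<Rightarrow> ('x::finite \<Rightarrow> real) \<Rightarrow> (real \<Rightarrow> 'x \<Rightarrow> 'x \<Rightarrow> real)
                         \<Rightarrow> ('x \<Rightarrow> real) \<Rightarrow> (real \<Rightarrow> 'x \<Rightarrow> 'x \<Rightarrow> real) \<Rightarrow> ('x \<Rightarrow> real) \<Rightarrow> real" where
  "objective T \<alpha> r Qpre plim Q P0 =
     (\<Sum>x\<in>UNIV. marginal T Q P0 T x * r x)
     - \<alpha> * (integral {0..T} (\<lambda>t. \<Sum>x\<in>UNIV. marginal T Q P0 t x * pen Qpre Q t x)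
            + KL P0 plim)"

definition value_fn :: "real \<Rightarrow> real \<Rightarrow> ('x::finite \<Rightarrow> real) \<Rightarrow> (real \<Rightarrow> 'x \<Rightarrow> 'x \<Rightarrow> real)
                        \<Rightarrow> (real \<Rightarrow> 'x \<Rightarrow> 'x \<Rightarrow> real) \<Rightarrow> real \<Rightarrow> 'x \<Rightarrow> real" where
  "value_fn T \<alpha> r Qpre Qs t x =
     (\<Sum>z\<in>UNIV. trans T Qs t x T z * r z)
     - \<alpha> * integral {t..T} (\<lambda>s. \<Sum>z\<in>UNIV. trans T Qs t x s z * pen Qpre Qs s z)"

end

theory Submission
  imports Defs
begin


definition lin_sol :: "real \<Rightarrow> real \<Rightarrow> (real \<Rightarrow> 'x::finite \<Rightarrow> 'x \<Rightarrow> real) \<Rightarrow> (real \<Rightarrow> 'x \<Rightarrow> real) \<Rightarrow> bool" where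
  "lin_sol a b A p \<longleftrightarrow> (\<forall>t\<in>{a..b}. \<forall>x. ((\<lambda>s. p s x) has_real_derivative (\<Sum>y\<in>UNIV. A t x y * p t y)) (at t within {a..b}))"

lemma cont_bound:
  fixes A :: "real \<Rightarrow> 'x::finite \<Rightarrow> 'x \<Rightarrow> real"
  assumes cont: "\<And>x y. continuous_on {a..b} (\<lambda>t. A t x y)"
  shows "\<exists>M\<ge>0. \<forall>t\<in>{a..b}. \<forall>x y. \<bar>A t x y\<bar> \<le> M"
proof -
  let ?g = "\<lambda>t. \<Sum>x\<in>UNIV. \<Sum>y\<in>UNIV. \<bar>A t x y\<bar>"
  have "continuous_on {a..b} ?g"
    by (intro continuous_intros cont)
  then have "compact (?g ` {a..b})" by (rule compact_continuous_image[OF _ compact_Icc])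
  then obtain B where B: "\<forall>z\<in>?g ` {a..b}. norm z \<le> B"
    using compact_imp_bounded bounded_iff by metis
  have "\<forall>t\<in>{a..b}. \<forall>x y. \<bar>A t x y\<bar> \<le> max B 0"
  proof (intro ballI allI)
    fix t x y assume t: "t \<in> {a..b}"
    have "\<bar>A t x y\<bar> \<le> (\<Sum>y\<in>UNIV. \<bar>A t x y\<bar>)"
      by (rule member_le_sum) auto
    also have "\<dots> \<le> ?g t"
      by (rule member_le_sum[where f="\<lambda>x. \<Sum>y\<in>UNIV. \<bar>A t x y\<bar>"]) (auto intro: sum_nonneg)
    also have "\<dots> \<le> B" using B t by force
    finally show "\<bar>A t x y\<bar> \<le> max B 0" by simp
  qed
  then show ?thesis by (intro exI[of _ "max B 0"]) auto
qed

lemma deriv_nonpos_le: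
  fixes f :: "real \<Rightarrow> real"
  assumes "a \<le> t" and d: "\<And>s. s \<in> {a..t} \<Longrightarrow> (f has_real_derivative f' s) (at s within {a..t})"
    and n: "\<And>s. s \<in> {a..t} \<Longrightarrow> f' s \<le> 0"
  shows "f t \<le> f a"
proof -
  have "(f' has_integral (f t - f a)) {a..t}"
    using assms by (intro fundamental_theorem_of_calculus) (auto simp: has_real_derivative_iff_has_vector_derivative)
  moreover have "((\<lambda>_. 0::real) has_integral 0) {a..t}" by simp
  ultimately have "f t - f a \<le> 0"
    using has_integral_le n by metis
  then show ?thesis by simp
qed


lemma lin_unique:
  fixes A :: "real \<Rightarrow> 'x::finite \<Rightarrow> 'x \<Rightarrow> real"
  assumes cont: "\<And>x y. continuous_on {a..b} (\<lambda>t. A t x y)"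
    and p: "lin_sol a b A p" and q: "lin_sol a b A q" and init: "p a = q a"
  shows "\<forall>t\<in>{a..b}. p t = q t"
proof -
  obtain M where Mz: "M \<ge> 0" and M: "\<forall>t\<in>{a..b}. \<forall>x y. \<bar>A t x y\<bar> \<le> M"
    using cont_bound[of a b A] cont by blast
  define d where "d t x = p t x - q t x" for t x
  define c where "c = 2 * M * real CARD('x)"
  define e where "e t = (\<Sum>x\<in>UNIV. (d t x)^2)" for t
  define e' where "e' t = (\<Sum>x\<in>UNIV. 2 * d t x * (\<Sum>y\<in>UNIV. A t x y * d t y))" for t
  define f where "f t = e t * exp (-c*(t-a))" for t
  have dd: "((\<lambda>s. d s x) has_real_derivative (\<Sum>y\<in>UNIV. A t x y * d t y)) (at t within {a..b})"
    if t: "t \<in> {a..b}" for t x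
  proof -
    have "((\<lambda>s. d s x) has_real_derivative (\<Sum>y\<in>UNIV. A t x y * p t y) - (\<Sum>y\<in>UNIV. A t x y * q t y)) (at t within {a..b})"
      unfolding d_def using p q t unfolding lin_sol_def by (intro DERIV_diff) auto
    also have "(\<Sum>y\<in>UNIV. A t x y * p t y) - (\<Sum>y\<in>UNIV. A t x y * q t y) = (\<Sum>y\<in>UNIV. A t x y * d t y)"
      unfolding d_def by (simp add: sum_subtractf right_diff_distrib)
    finally show ?thesis .
  qed
  have ed: "(e has_real_derivative e' t) (at t within {a..b})" if t: "t \<in> {a..b}" for t
    unfolding e_def e'_def
  proof (rule DERIV_sum)
    fix x :: 'x
    have "((\<lambda>s. d s x * d s x) has_real_derivative
          (\<Sum>y\<in>UNIV. A t x y * d t y) * d t x + d t x * (\<Sum>y\<in>UNIV. A t x y * d t y)) (at t within {a..b})"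
      using DERIV_mult[OF dd[of t x, OF t] dd[of t x, OF t]] by (simp add: algebra_simps)
    then show "((\<lambda>s. (d s x)^2) has_real_derivative 2 * d t x * (\<Sum>y\<in>UNIV. A t x y * d t y)) (at t within {a..b})"
      by (simp add: power2_eq_square algebra_simps)
  qed
  have eb: "e' t \<le> c * e t" if t: "t \<in> {a..b}" for t
  proof -
    have "2 * d t x * (A t x y * d t y) \<le> M * ((d t x)^2 + (d t y)^2)" for x y
    proof -
      have "2 * d t x * (A t x y * d t y) \<le> \<bar>2 * d t x * (A t x y * d t y)\<bar>" by simp
      also have "\<dots> = 2 * \<bar>A t x y\<bar> * (\<bar>d t x\<bar> * \<bar>d t y\<bar>)" by (simp add: abs_mult mult_ac)
      also have "\<dots> \<le> 2 * M * (\<bar>d t x\<bar> * \<bar>d t y\<bar>)"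
        using M t by (intro mult_right_mono) auto
      also have "\<dots> \<le> M * ((d t x)^2 + (d t y)^2)"
      proof -
        have "2 * (\<bar>d t x\<bar> * \<bar>d t y\<bar>) \<le> (d t x)^2 + (d t y)^2"
          using sum_squares_bound[of "\<bar>d t x\<bar>" "\<bar>d t y\<bar>"] by (simp add: mult.assoc)
        then show ?thesis using Mz by (metis mult.assoc mult.left_commute mult_left_mono)
      qed
      finally show ?thesis .
    qed
    then have h2: "e' t \<le> (\<Sum>x\<in>UNIV. \<Sum>y\<in>UNIV. M * ((d t x)^2 + (d t y)^2))"
      unfolding e'_def sum_distrib_left by (intro sum_mono)
    have h3: "(\<Sum>x\<in>UNIV. \<Sum>y\<in>UNIV. M * ((d t x)^2 + (d t y)^2))
        = (\<Sum>x\<in>UNIV. \<Sum>y::'x\<in>UNIV. M * (d t x)^2) + (\<Sum>x::'x\<in>UNIV. \<Sum>y\<in>UNIV. M * (d t y)^2)"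
      by (simp add: distrib_left sum.distrib)
    have h4: "(\<Sum>x\<in>UNIV. \<Sum>y::'x\<in>UNIV. M * (d t x)^2) = M * real CARD('x) * e t"
      unfolding e_def by (simp add: sum_distrib_left mult_ac)
    have h5: "(\<Sum>x::'x\<in>UNIV. \<Sum>y\<in>UNIV. M * (d t y)^2) = M * real CARD('x) * e t"
      unfolding e_def by (simp add: sum_distrib_left mult_ac)
    show ?thesis using h2 unfolding h3 h4 h5 c_def by (simp add: mult_ac)
  qed
  have e0: "e t \<ge> 0" for t unfolding e_def by (intro sum_nonneg) auto
  have ea: "e a = 0" unfolding e_def d_def using init by simp
  show ?thesis
  proof
    fix t assume t: "t \<in> {a..b}"
    have "f t \<le> f a"
    proof (rule deriv_nonpos_le[where f=f and a=a and t=t and f'="\<lambda>s. (e' s - c * e s) * exp (-c*(s-a))"])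
      show "a \<le> t" using t by simp
      fix s assume s: "s \<in> {a..t}"
      then have sab: "s \<in> {a..b}" using t by auto
      have ex: "((\<lambda>s. exp (-c*(s-a))) has_real_derivative exp (-c*(s-a)) * (-c)) (at s within {a..b})"
        by (auto intro!: derivative_eq_intros)
      have "(f has_real_derivative (e' s * exp (-c*(s-a)) + exp (-c*(s-a)) * (-c) * e s)) (at s within {a..b})"
        unfolding f_def by (rule DERIV_mult[OF ed[OF sab] ex])
      moreover have "e' s * exp (-c*(s-a)) + exp (-c*(s-a)) * (-c) * e s = (e' s - c * e s) * exp (-c*(s-a))"
        by (simp add: algebra_simps)
      ultimately have "(f has_real_derivative (e' s - c * e s) * exp (-c*(s-a))) (at s within {a..b})"
        by simp
      then show "(f has_real_derivative (e' s - c * e s) * exp (-c*(s-a))) (at s within {a..t})"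
        by (rule has_field_derivative_subset) (use t in auto)
      show "(e' s - c * e s) * exp (-c*(s-a)) \<le> 0"
        using eb[OF sab] by (simp add: mult_nonpos_nonneg)
    qed
    then have "e t \<le> 0" unfolding f_def using ea by (simp add: mult_le_0_iff)
    then have "e t = 0" using e0[of t] by simp
    then have "\<forall>x. (d t x)^2 = 0" unfolding e_def
      using sum_nonneg_eq_0_iff[of UNIV "\<lambda>x. (d t x)^2"] by simp
    then show "p t = q t" unfolding d_def by auto
  qed
qed


primrec picard :: "real \<Rightarrow> (real \<Rightarrow> 'x::finite \<Rightarrow> 'x \<Rightarrow> real) \<Rightarrow> ('x \<Rightarrow> real) \<Rightarrow> nat \<Rightarrow> real \<Rightarrow> 'x \<Rightarrow> real" where
  "picard a A pz 0 = (\<lambda>t x. pz x)"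
| "picard a A pz (Suc n) = (\<lambda>t x. pz x + integral {a..t} (\<lambda>s. \<Sum>y\<in>UNIV. A s x y * picard a A pz n s y))"

lemma picard_cont:
  fixes A :: "real \<Rightarrow> 'x::finite \<Rightarrow> 'x \<Rightarrow> real"
  assumes cont: "\<And>x y. continuous_on {a..b} (\<lambda>t. A t x y)"
  shows "continuous_on {a..b} (\<lambda>t. picard a A pz n t x)"
proof (induction n arbitrary: x)
  case 0 then show ?case by simp
next
  case (Suc n)
  have "continuous_on {a..b} (\<lambda>s. \<Sum>y\<in>UNIV. A s x y * picard a A pz n s y)"
    by (intro continuous_intros cont Suc)
  then have "(\<lambda>s. \<Sum>y\<in>UNIV. A s x y * picard a A pz n s y) integrable_on {a..b}"
    by (rule integrable_continuous_interval)
  then show ?case by (simp, intro continuous_intros indefinite_integral_continuous_1)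
qed

lemma picard_integrable:
  fixes A :: "real \<Rightarrow> 'x::finite \<Rightarrow> 'x \<Rightarrow> real"
  assumes cont: "\<And>x y. continuous_on {a..b} (\<lambda>t. A t x y)" and t: "t \<le> b"
  shows "(\<lambda>s. \<Sum>y\<in>UNIV. A s x y * picard a A pz n s y) integrable_on {a..t}"
proof -
  have "continuous_on {a..b} (\<lambda>s. \<Sum>y\<in>UNIV. A s x y * picard a A pz n s y)"
    by (intro continuous_intros cont picard_cont[where A=A and a=a and b=b, OF cont])
  then have "continuous_on {a..t} (\<lambda>s. \<Sum>y\<in>UNIV. A s x y * picard a A pz n s y)"
    by (rule continuous_on_subset) (use t in auto)
  then show ?thesis by (rule integrable_continuous_interval)
qed

lemma picard_diff:
  fixes A :: "real \<Rightarrow> 'x::finite \<Rightarrow> 'x \<Rightarrow> real" and pz :: "'x \<Rightarrow> real"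
  assumes cont: "\<And>x y. continuous_on {a..b} (\<lambda>t. A t x y)"
    and Mz: "M \<ge> 0" and M: "\<forall>t\<in>{a..b}. \<forall>x y. \<bar>A t x y\<bar> \<le> M"
  defines "K \<equiv> M * real CARD('x)" and "mz \<equiv> (\<Sum>y\<in>UNIV. \<bar>pz y\<bar>)"
  shows "\<forall>t\<in>{a..b}. \<forall>x. \<bar>picard a A pz (Suc n) t x - picard a A pz n t x\<bar> \<le> mz * (K * (t - a))^(Suc n) / fact (Suc n)"
proof (induction n)
  have c1: "real CARD('x) \<ge> 1" by simp
  have K0: "K \<ge> 0" unfolding K_def using Mz by simp
  have mzz: "mz \<ge> 0" unfolding mz_def by (intro sum_nonneg) auto
  case 0
  show ?case
  proof (intro ballI allI)
    fix t x assume t: "t \<in> {a..b}"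
    have "\<bar>picard a A pz (Suc 0) t x - picard a A pz 0 t x\<bar> = norm (integral {a..t} (\<lambda>s. \<Sum>y\<in>UNIV. A s x y * pz y))"
      by simp
    also have "\<dots> \<le> integral {a..t} (\<lambda>s. M * mz)"
    proof (rule integral_norm_bound_integral)
      show "(\<lambda>s. \<Sum>y\<in>UNIV. A s x y * pz y) integrable_on {a..t}"
        using picard_integrable[where A=A and a=a and b=b and t=t and x=x and pz=pz and n=0, OF cont] t by simp
      show "(\<lambda>s. M * mz) integrable_on {a..t}" by (intro integrable_continuous_interval continuous_intros)
      fix s assume s: "s \<in> {a..t}"
      have "norm (\<Sum>y\<in>UNIV. A s x y * pz y) \<le> (\<Sum>y\<in>UNIV. \<bar>A s x y * pz y\<bar>)"
        by (simp add: sum_abs)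
      also have "\<dots> \<le> (\<Sum>y\<in>UNIV. M * \<bar>pz y\<bar>)"
        using M s t by (intro sum_mono) (auto simp: abs_mult intro!: mult_right_mono)
      finally show "norm (\<Sum>y\<in>UNIV. A s x y * pz y) \<le> M * mz"
        by (simp add: mz_def sum_distrib_left)
    qed
    also have "\<dots> = (t - a) * (M * mz)" using t by (simp add: content_real)
    also have "\<dots> \<le> mz * (K * (t - a))^(Suc 0) / fact (Suc 0)"
    proof -
      have "M \<le> K" unfolding K_def using Mz c1 by (simp add: mult_le_cancel_left1)
      then have "(t - a) * (M * mz) \<le> (t - a) * (K * mz)"
        using t mzz by (intro mult_left_mono mult_right_mono) auto
      then show ?thesis by (simp add: algebra_simps)
    qed
    finally show "\<bar>picard a A pz (Suc 0) t x - picard a A pz 0 t x\<bar> \<le> mz * (K * (t - a))^(Suc 0) / fact (Suc 0)" .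
  qed
next
  have K0: "K \<ge> 0" unfolding K_def using Mz by simp
  have mzz: "mz \<ge> 0" unfolding mz_def by (intro sum_nonneg) auto
  case (Suc n)
  show ?case
  proof (intro ballI allI)
    fix t x assume t: "t \<in> {a..b}"
    let ?f = "\<lambda>k s. \<Sum>y\<in>UNIV. A s x y * picard a A pz k s y"
    have "picard a A pz (Suc (Suc n)) t x - picard a A pz (Suc n) t x
        = integral {a..t} (?f (Suc n)) - integral {a..t} (?f n)" by simp
    also have "\<dots> = integral {a..t} (\<lambda>s. ?f (Suc n) s - ?f n s)"
      using t by (intro integral_diff[symmetric] picard_integrable[where A=A and a=a and b=b and pz=pz, OF cont]) auto
    finally have eq: "picard a A pz (Suc (Suc n)) t x - picard a A pz (Suc n) t x
        = integral {a..t} (\<lambda>s. ?f (Suc n) s - ?f n s)" .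
    let ?g = "\<lambda>s. mz * K^(Suc (Suc n)) * (s - a)^(Suc n) / fact (Suc n)"
    have "norm (integral {a..t} (\<lambda>s. ?f (Suc n) s - ?f n s)) \<le> integral {a..t} ?g"
    proof (rule integral_norm_bound_integral)
      show "(\<lambda>s. ?f (Suc n) s - ?f n s) integrable_on {a..t}"
        using t by (intro integrable_diff picard_integrable[where A=A and a=a and b=b and pz=pz, OF cont]) auto
      show "?g integrable_on {a..t}"
        by (intro integrable_continuous_interval continuous_intros) auto
      fix s assume s: "s \<in> {a..t}"
      then have sab: "s \<in> {a..b}" using t by auto
      have "norm (?f (Suc n) s - ?f n s) = \<bar>\<Sum>y\<in>UNIV. A s x y * (picard a A pz (Suc n) s y - picard a A pz n s y)\<bar>"
        by (simp add: sum_subtractf right_diff_distrib)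
      also have "\<dots> \<le> (\<Sum>y\<in>UNIV. \<bar>A s x y * (picard a A pz (Suc n) s y - picard a A pz n s y)\<bar>)"
        by (rule sum_abs)
      also have "\<dots> \<le> (\<Sum>y::'x\<in>UNIV. M * (mz * (K * (s - a))^(Suc n) / fact (Suc n)))"
      proof (rule sum_mono)
        fix y :: 'x
        have "\<bar>A s x y\<bar> \<le> M" using M sab by auto
        moreover have "\<bar>picard a A pz (Suc n) s y - picard a A pz n s y\<bar> \<le> mz * (K * (s - a))^(Suc n) / fact (Suc n)"
          using Suc.IH sab by auto
        ultimately show "\<bar>A s x y * (picard a A pz (Suc n) s y - picard a A pz n s y)\<bar> \<le> M * (mz * (K * (s - a))^(Suc n) / fact (Suc n))"
          unfolding abs_mult using Mz by (intro mult_mono) auto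
      qed
      also have "\<dots> = K * (mz * (K * (s - a))^(Suc n) / fact (Suc n))"
        by (simp add: K_def mult_ac)
      also have "\<dots> = ?g s"
        by (simp only: power_mult_distrib power_Suc[of K "Suc n"] mult_ac times_divide_eq_right)
      finally show "norm (?f (Suc n) s - ?f n s) \<le> ?g s" .
    qed
    also have "integral {a..t} ?g = mz * (K * (t - a))^(Suc (Suc n)) / fact (Suc (Suc n))"
    proof -
      let ?G = "\<lambda>s. mz * K^(Suc (Suc n)) * (s - a)^(Suc (Suc n)) / fact (Suc (Suc n))"
      have "(?g has_integral (?G t - ?G a)) {a..t}"
      proof (rule fundamental_theorem_of_calculus)
        show "a \<le> t" using t by simp
        fix s assume "s \<in> {a..t}"
        have d1: "((\<lambda>s. s - a) has_real_derivative 1) (at s within {a..t})"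
          by (auto intro!: derivative_eq_intros)
        have d2: "((\<lambda>s. (s - a)^(Suc (Suc n))) has_real_derivative of_nat (Suc (Suc n)) * (1 * (s - a)^(Suc (Suc n) - Suc 0))) (at s within {a..t})"
          by (rule DERIV_power[OF d1])
        have "(?G has_real_derivative mz * K^(Suc (Suc n)) * (of_nat (Suc (Suc n)) * (1 * (s - a)^(Suc (Suc n) - Suc 0))) / fact (Suc (Suc n))) (at s within {a..t})"
          by (rule DERIV_cdivide[OF DERIV_cmult[OF d2]])
        then have der: "(?G has_real_derivative mz * K^(Suc (Suc n)) * (real (Suc (Suc n)) * (s - a)^(Suc n)) / fact (Suc (Suc n))) (at s within {a..t})"
          by simp
        have eq: "mz * K^(Suc (Suc n)) * (real (Suc (Suc n)) * (s - a)^(Suc n)) / fact (Suc (Suc n)) = ?g s"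
        proof -
          have c0: "real (Suc (Suc n)) \<noteq> 0" by simp
          have "fact (Suc (Suc n)) = real (Suc (Suc n)) * (fact (Suc n) :: real)"
            by (rule fact_Suc)
          then show ?thesis using c0
            by (simp only: mult_divide_mult_cancel_left_if) simp
        qed
        show "(?G has_vector_derivative ?g s) (at s within {a..t})"
          using der[unfolded eq] by (simp only: has_real_derivative_iff_has_vector_derivative)
      qed
      then have "integral {a..t} ?g = ?G t - ?G a" by (rule integral_unique)
      also have "?G t - ?G a = mz * (K * (t - a))^(Suc (Suc n)) / fact (Suc (Suc n))"
        by (simp only: power_mult_distrib) simp
      finally show ?thesis .
    qed
    finally show "\<bar>picard a A pz (Suc (Suc n)) t x - picard a A pz (Suc n) t x\<bar> \<le> mz * (K * (t - a))^(Suc (Suc n)) / fact (Suc (Suc n))"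
      using eq by simp
  qed
qed


lemma lin_exist:
  fixes A :: "real \<Rightarrow> 'x::finite \<Rightarrow> 'x \<Rightarrow> real" and pz :: "'x \<Rightarrow> real"
  assumes ab: "a \<le> b" and cont: "\<And>x y. continuous_on {a..b} (\<lambda>t. A t x y)"
  shows "\<exists>p. p a = pz \<and> lin_sol a b A p \<and>
    ((\<forall>t\<in>{a..b}. \<forall>x y. 0 \<le> A t x y) \<and> (\<forall>x. 0 \<le> pz x) \<longrightarrow> (\<forall>t\<in>{a..b}. \<forall>x. pz x \<le> p t x))"
proof -
  obtain M where Mz: "M \<ge> 0" and M: "\<forall>t\<in>{a..b}. \<forall>x y. \<bar>A t x y\<bar> \<le> M"
    using cont_bound[of a b A] cont by blast
  define K where "K = M * real CARD('x)"
  define mz where "mz = (\<Sum>y\<in>UNIV. \<bar>pz y\<bar>)"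
  define P where "P = picard a A pz"
  define dn where "dn n t x = P (Suc n) t x - P n t x" for n t x
  define bnd where "bnd n = mz * (K * (b - a))^(Suc n) / fact (Suc n)" for n
  have K0: "K \<ge> 0" unfolding K_def using Mz by simp
  have mz0: "mz \<ge> 0" unfolding mz_def by (intro sum_nonneg) auto
  have bnd0: "bnd n \<ge> 0" for n unfolding bnd_def using K0 mz0 ab by simp
  have diff: "\<bar>dn n t x\<bar> \<le> bnd n" if t: "t \<in> {a..b}" for n t x
  proof -
    have "\<bar>dn n t x\<bar> \<le> mz * (K * (t - a))^(Suc n) / fact (Suc n)"
      using picard_diff[where A=A and a=a and b=b and pz=pz, OF cont Mz M] t
      unfolding dn_def P_def K_def mz_def by blast
    also have "\<dots> \<le> bnd n"
      unfolding bnd_def using t K0 mz0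
      by (intro divide_right_mono mult_left_mono power_mono mult_left_mono) auto
    finally show ?thesis .
  qed
  have sb: "summable bnd"
  proof -
    have "summable (\<lambda>n. inverse (fact n) * (K * (b - a))^n)" by (rule summable_exp)
    then have "summable (\<lambda>n. inverse (fact (Suc n)) * (K * (b - a))^(Suc n))"
      by (subst summable_Suc_iff)
    then have "summable (\<lambda>n. mz * (inverse (fact (Suc n)) * (K * (b - a))^(Suc n)))"
      by (rule summable_mult)
    moreover have "(\<lambda>n. mz * (inverse (fact (Suc n)) * (K * (b - a))^(Suc n))) = bnd"
      unfolding bnd_def by (auto simp: divide_inverse mult_ac)
    ultimately show ?thesis by (metis (no_types))
  qed
  define S where "S = suminf bnd"
  have sdn: "summable (\<lambda>n. dn n t x)" if t: "t \<in> {a..b}" for t x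
    by (rule summable_comparison_test[OF _ sb]) (use diff[OF t] in auto)
  define L where "L t x = pz x + suminf (\<lambda>n. dn n t x)" for t x
  have Pn: "P n t x = pz x + (\<Sum>k<n. dn k t x)" for n t x
  proof -
    have "(\<Sum>k<n. dn k t x) = P n t x - P 0 t x"
      unfolding dn_def by (rule sum_lessThan_telescope)
    then show ?thesis unfolding P_def by simp
  qed
  have conv: "(\<lambda>n. P n t x) \<longlonglongrightarrow> L t x" if t: "t \<in> {a..b}" for t x
    unfolding Pn L_def by (intro tendsto_add tendsto_const summable_LIMSEQ sdn t)
  have bound: "\<bar>P n t x\<bar> \<le> mz + S" if t: "t \<in> {a..b}" for n t x
  proof -
    have "\<bar>pz x\<bar> \<le> mz" unfolding mz_def by (rule member_le_sum[where f="\<lambda>y. \<bar>pz y\<bar>"]) auto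
    moreover have "\<bar>\<Sum>k<n. dn k t x\<bar> \<le> S"
    proof -
      have "\<bar>\<Sum>k<n. dn k t x\<bar> \<le> (\<Sum>k<n. \<bar>dn k t x\<bar>)" by (rule sum_abs)
      also have "\<dots> \<le> (\<Sum>k<n. bnd k)" by (intro sum_mono diff t)
      also have "\<dots> \<le> S" unfolding S_def using sb bnd0 by (intro sum_le_suminf) auto
      finally show ?thesis .
    qed
    ultimately show ?thesis unfolding Pn by linarith
  qed
  define B where "B = real CARD('x) * (M * (mz + S))"
  let ?f = "\<lambda>k s x. \<Sum>y\<in>UNIV. A s x y * P k s y"
  let ?g = "\<lambda>s x. \<Sum>y\<in>UNIV. A s x y * L s y"
  have inteq: "(\<lambda>s. ?g s x) integrable_on {a..t} \<and> L t x = pz x + integral {a..t} (\<lambda>s. ?g s x)"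
    if t: "t \<in> {a..b}" for t x
  proof -
    have fi: "(\<lambda>s. ?f k s x) integrable_on {a..t}" for k
      unfolding P_def using t by (intro picard_integrable[where A=A and a=a and b=b and pz=pz, OF cont]) auto
    have hi: "(\<lambda>s. B) integrable_on {a..t}" by (intro integrable_continuous_interval continuous_intros)
    have le: "norm (?f k s x) \<le> B" if s: "s \<in> {a..t}" for k s
    proof -
      have sab: "s \<in> {a..b}" using s t by auto
      have "norm (?f k s x) \<le> (\<Sum>y\<in>UNIV. \<bar>A s x y * P k s y\<bar>)" by (simp add: sum_abs)
      also have "\<dots> \<le> (\<Sum>y::'x\<in>UNIV. M * (mz + S))"
      proof (rule sum_mono)
        fix y :: 'x
        show "\<bar>A s x y * P k s y\<bar> \<le> M * (mz + S)"
          unfolding abs_mult using M sab bound[OF sab, of k y] Mz by (intro mult_mono) auto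
      qed
      also have "\<dots> = B" unfolding B_def by simp
      finally show ?thesis .
    qed
    have cv: "(\<lambda>k. ?f k s x) \<longlonglongrightarrow> ?g s x" if s: "s \<in> {a..t}" for s
    proof -
      have sab: "s \<in> {a..b}" using s t by auto
      show ?thesis by (intro tendsto_sum tendsto_mult_left conv sab)
    qed
    have gi: "(\<lambda>s. ?g s x) integrable_on {a..t}"
      and lim: "(\<lambda>k. integral {a..t} (\<lambda>s. ?f k s x)) \<longlonglongrightarrow> integral {a..t} (\<lambda>s. ?g s x)"
      using dominated_convergence[where f="\<lambda>k s. ?f k s x" and h="\<lambda>s. B" and S="{a..t}" and g="\<lambda>s. ?g s x", OF fi hi le cv]
      by auto
    have "(\<lambda>k. P (Suc k) t x) \<longlonglongrightarrow> pz x + integral {a..t} (\<lambda>s. ?g s x)"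
      unfolding P_def picard.simps using lim unfolding P_def by (intro tendsto_add tendsto_const)
    moreover have "(\<lambda>k. P (Suc k) t x) \<longlonglongrightarrow> L t x"
      using conv[OF t] by (rule LIMSEQ_Suc)
    ultimately have "L t x = pz x + integral {a..t} (\<lambda>s. ?g s x)"
      using LIMSEQ_unique by blast
    with gi show ?thesis by simp
  qed
  have Lcont: "continuous_on {a..b} (\<lambda>t. L t x)" for x
  proof -
    have "(\<lambda>s. ?g s x) integrable_on {a..b}" using inteq[of b x] ab by auto
    then have "continuous_on {a..b} (\<lambda>t. pz x + integral {a..t} (\<lambda>s. ?g s x))"
      by (intro continuous_intros indefinite_integral_continuous_1)
    then show ?thesis
      by (rule continuous_on_eq) (use inteq in auto)
  qed
  have gcont: "continuous_on {a..b} (\<lambda>s. ?g s x)" for x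
    by (intro continuous_intros cont Lcont)
  have sol: "lin_sol a b A L"
    unfolding lin_sol_def
  proof (intro ballI allI)
    fix t x assume t: "t \<in> {a..b}"
    have "((\<lambda>u. integral {a..u} (\<lambda>s. ?g s x)) has_real_derivative ?g t x) (at t within {a..b})"
      using integral_has_vector_derivative[OF gcont t]
      by (simp add: has_real_derivative_iff_has_vector_derivative)
    then have "((\<lambda>u. pz x + integral {a..u} (\<lambda>s. ?g s x)) has_real_derivative ?g t x) (at t within {a..b})"
      using DERIV_add[OF DERIV_const] by fastforce
    then show "((\<lambda>s. L s x) has_real_derivative ?g t x) (at t within {a..b})"
      by (rule has_field_derivative_transform_within[where d=1]) (use t inteq in auto)
  qed
  have La: "L a = pz"
  proof
    fix x show "L a x = pz x" using inteq[of a x] ab by simp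
  qed
  have nonneg: "pz x \<le> L t x"
    if A0: "\<forall>t\<in>{a..b}. \<forall>x y. 0 \<le> A t x y" and p0: "\<forall>x. 0 \<le> pz x" and t: "t \<in> {a..b}" for t x
  proof -
    have "\<forall>t\<in>{a..b}. \<forall>x. pz x \<le> P n t x" for n
    proof (induction n)
      case 0 then show ?case unfolding P_def by simp
    next
      case (Suc n)
      show ?case
      proof (intro ballI allI)
        fix t x assume t: "t \<in> {a..b}"
        have "0 \<le> integral {a..t} (\<lambda>s. ?f n s x)"
        proof (rule integral_nonneg)
          show "(\<lambda>s. ?f n s x) integrable_on {a..t}"
            unfolding P_def using t by (intro picard_integrable[where A=A and a=a and b=b and pz=pz, OF cont]) auto
          fix s assume s: "s \<in> {a..t}"
          then have sab: "s \<in> {a..b}" using t by auto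
          show "0 \<le> ?f n s x"
          proof (intro sum_nonneg mult_nonneg_nonneg)
            fix y
            show "0 \<le> A s x y" using A0 sab by auto
            have "pz y \<le> P n s y" using Suc.IH sab by auto
            then show "0 \<le> P n s y" using p0 by (metis order_trans)
          qed
        qed
        then show "pz x \<le> P (Suc n) t x" unfolding P_def by simp
      qed
    qed
    then show ?thesis
      by (intro LIMSEQ_le_const[OF conv[OF t]]) (use t in auto)
  qed
  show ?thesis
    using sol La nonneg by blast
qed



lemma lin_pos:
  fixes A :: "real \<Rightarrow> 'x::finite \<Rightarrow> 'x \<Rightarrow> real"
  assumes ab: "a \<le> b" and cont: "\<And>x y. continuous_on {a..b} (\<lambda>t. A t x y)"
    and offd: "\<forall>t\<in>{a..b}. \<forall>x y. x \<noteq> y \<longrightarrow> 0 \<le> A t x y"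
    and sol: "lin_sol a b A p" and p0: "\<forall>x. 0 \<le> p a x"
  shows "\<exists>c. \<forall>t\<in>{a..b}. \<forall>x. exp (- (c * (t - a))) * p a x \<le> p t x"
proof -
  obtain M where Mz: "M \<ge> 0" and M: "\<forall>t\<in>{a..b}. \<forall>x y. \<bar>A t x y\<bar> \<le> M"
    using cont_bound[of a b A] cont by blast
  define A' where "A' t x y = A t x y + (if x = y then M else 0)" for t x y
  have cont': "continuous_on {a..b} (\<lambda>t. A' t x y)" for x y
    unfolding A'_def by (intro continuous_intros cont)
  define w where "w t x = exp (M * (t - a)) * p t x" for t x
  have wsol: "lin_sol a b A' w"
    unfolding lin_sol_def
  proof (intro ballI allI)
    fix t x assume t: "t \<in> {a..b}"
    have e: "((\<lambda>s. exp (M * (s - a))) has_real_derivative exp (M * (t - a)) * M) (at t within {a..b})"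
      by (auto intro!: derivative_eq_intros)
    have d: "((\<lambda>s. p s x) has_real_derivative (\<Sum>y\<in>UNIV. A t x y * p t y)) (at t within {a..b})"
      using sol t unfolding lin_sol_def by auto
    have "((\<lambda>s. w s x) has_real_derivative exp (M * (t - a)) * M * p t x + (\<Sum>y\<in>UNIV. A t x y * p t y) * exp (M * (t - a))) (at t within {a..b})"
      unfolding w_def using DERIV_mult[OF e d] by simp
    moreover have "exp (M * (t - a)) * M * p t x + (\<Sum>y\<in>UNIV. A t x y * p t y) * exp (M * (t - a))
        = (\<Sum>y\<in>UNIV. A' t x y * w t y)"
    proof -
      have "(\<Sum>y\<in>UNIV. A' t x y * w t y) = (\<Sum>y\<in>UNIV. A t x y * w t y) + (\<Sum>y\<in>UNIV. (if x = y then M else 0) * w t y)"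
        unfolding A'_def by (simp add: distrib_right sum.distrib)
      also have "(\<Sum>y\<in>UNIV. (if x = y then M else 0) * w t y) = (\<Sum>y\<in>UNIV. if x = y then M * w t x else 0)"
        by (rule sum.cong) auto
      also have "\<dots> = M * w t x" by simp
      finally show ?thesis unfolding w_def by (simp add: sum_distrib_left sum_distrib_right mult_ac)
    qed
    ultimately show "((\<lambda>s. w s x) has_real_derivative (\<Sum>y\<in>UNIV. A' t x y * w t y)) (at t within {a..b})"
      by simp
  qed
  have A'0: "\<forall>t\<in>{a..b}. \<forall>x y. 0 \<le> A' t x y"
  proof (intro ballI allI)
    fix t x y assume t: "t \<in> {a..b}"
    have "- A t x y \<le> M" using M t by (auto simp: abs_le_iff)
    then show "0 \<le> A' t x y" unfolding A'_def using offd t by auto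
  qed
  obtain q where qa: "q a = p a" and qs: "lin_sol a b A' q"
    and qn: "(\<forall>t\<in>{a..b}. \<forall>x y. 0 \<le> A' t x y) \<and> (\<forall>x. 0 \<le> p a x) \<longrightarrow> (\<forall>t\<in>{a..b}. \<forall>x. p a x \<le> q t x)"
    using lin_exist[where A=A' and a=a and b=b and pz="p a", OF ab cont'] by blast
  have wa: "w a = p a" unfolding w_def by auto
  have wq: "\<forall>t\<in>{a..b}. w t = q t"
    using lin_unique[where A=A' and a=a and b=b, OF cont' wsol qs] wa qa by simp
  show ?thesis
  proof (intro exI[of _ M] ballI allI)
    fix t x assume t: "t \<in> {a..b}"
    have "p a x \<le> w t x" using qn A'0 p0 wq t by auto
    then have "exp (- (M * (t - a))) * p a x \<le> exp (- (M * (t - a))) * w t x"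
      by (intro mult_left_mono) auto
    also have "\<dots> = (exp (- (M * (t - a))) * exp (M * (t - a))) * p t x" unfolding w_def by (simp only: mult.assoc)
    also have "\<dots> = p t x" by (simp add: exp_add[symmetric])
    finally show "exp (- (M * (t - a))) * p a x \<le> p t x" .
  qed
qed

definition fwdA :: "(real \<Rightarrow> 'x::finite \<Rightarrow> 'x \<Rightarrow> real) \<Rightarrow> real \<Rightarrow> 'x \<Rightarrow> 'x \<Rightarrow> real" where
  "fwdA Q t x y = (if x = y then - (\<Sum>z\<in>UNIV - {x}. Q t x z) else Q t y x)"

definition fsol :: "real \<Rightarrow> real \<Rightarrow> (real \<Rightarrow> 'x::finite \<Rightarrow> 'x \<Rightarrow> real) \<Rightarrow> (real \<Rightarrow> 'x \<Rightarrow> real) \<Rightarrow> bool" where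
  "fsol a b Q p \<longleftrightarrow> (\<forall>t\<in>{a..b}. \<forall>x. ((\<lambda>s. p s x) has_real_derivative
          ((\<Sum>y\<in>UNIV - {x}. Q t y x * p t y) - (\<Sum>y\<in>UNIV - {x}. Q t x y * p t x)))
          (at t within {a..b}))"

lemma fwdA_sum:
  fixes Q :: "real \<Rightarrow> 'x::finite \<Rightarrow> 'x \<Rightarrow> real"
  shows "(\<Sum>y\<in>UNIV. fwdA Q t x y * p y) = (\<Sum>y\<in>UNIV - {x}. Q t y x * p y) - (\<Sum>y\<in>UNIV - {x}. Q t x y * p x)"
proof -
  have "(\<Sum>y\<in>UNIV. fwdA Q t x y * p y) = fwdA Q t x x * p x + (\<Sum>y\<in>UNIV - {x}. fwdA Q t x y * p y)"
    by (subst sum.remove[of UNIV x]) auto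
  also have "(\<Sum>y\<in>UNIV - {x}. fwdA Q t x y * p y) = (\<Sum>y\<in>UNIV - {x}. Q t y x * p y)"
    by (rule sum.cong) (auto simp: fwdA_def)
  finally show ?thesis by (simp add: fwdA_def sum_distrib_right)
qed

lemma fsol_iff: "fsol a b Q p \<longleftrightarrow> lin_sol a b (fwdA Q) p"
  unfolding fsol_def lin_sol_def fwdA_sum ..

lemma fwdA_cont:
  fixes Q :: "real \<Rightarrow> 'x::finite \<Rightarrow> 'x \<Rightarrow> real"
  assumes "\<And>x y. continuous_on {a..b} (\<lambda>t. Q t x y)"
  shows "continuous_on {a..b} (\<lambda>t. fwdA Q t x y)"
  by (cases "x = y") (auto simp: fwdA_def intro!: continuous_intros assms)

lemma flow_props:
  fixes Q :: "real \<Rightarrow> 'x::finite \<Rightarrow> 'x \<Rightarrow> real"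
  assumes ab: "a \<le> b" and cont: "\<And>x y. continuous_on {a..b} (\<lambda>t. Q t x y)"
  shows "flow a b Q pz a = pz" "fsol a b Q (flow a b Q pz)"
    "\<And>p. fsol a b Q p \<Longrightarrow> p a = pz \<Longrightarrow> \<forall>t\<in>{a..b}. flow a b Q pz t = p t"
proof -
  have cA: "\<And>x y. continuous_on {a..b} (\<lambda>t. fwdA Q t x y)" by (rule fwdA_cont[OF cont])
  let ?P = "\<lambda>p. p a = pz \<and>
      (\<forall>t\<in>{a..b}. \<forall>x. ((\<lambda>s. p s x) has_real_derivative
          ((\<Sum>y\<in>UNIV - {x}. Q t y x * p t y) - (\<Sum>y\<in>UNIV - {x}. Q t x y * p t x)))
          (at t within {a..b})) \<and>
      (\<forall>t. t \<notin> {a..b} \<longrightarrow> p t = (\<lambda>_. 0))"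
  obtain p where pa: "p a = pz" and ps: "lin_sol a b (fwdA Q) p"
    using lin_exist[where A="fwdA Q" and a=a and b=b and pz=pz, OF ab cA] by blast
  define p' where "p' t = (if t \<in> {a..b} then p t else (\<lambda>_. 0))" for t
  have p's: "lin_sol a b (fwdA Q) p'"
    unfolding lin_sol_def
  proof (intro ballI allI)
    fix t x assume t: "t \<in> {a..b}"
    have "((\<lambda>s. p s x) has_real_derivative (\<Sum>y\<in>UNIV. fwdA Q t x y * p t y)) (at t within {a..b})"
      using ps t unfolding lin_sol_def by auto
    then have "((\<lambda>s. p' s x) has_real_derivative (\<Sum>y\<in>UNIV. fwdA Q t x y * p t y)) (at t within {a..b})"
      by (rule has_field_derivative_transform_within[where d=1]) (use t in \<open>auto simp: p'_def\<close>)
    then show "((\<lambda>s. p' s x) has_real_derivative (\<Sum>y\<in>UNIV. fwdA Q t x y * p' t y)) (at t within {a..b})"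
      using t by (simp add: p'_def)
  qed
  have Pp': "?P p'"
    using p's ab pa unfolding lin_sol_def fwdA_sum by (auto simp: p'_def)
  have uniq: "q = p'" if "?P q" for q
  proof
    fix t
    have qs: "lin_sol a b (fwdA Q) q" using that unfolding lin_sol_def fwdA_sum by blast
    show "q t = p' t"
    proof (cases "t \<in> {a..b}")
      case True
      then show ?thesis using lin_unique[where A="fwdA Q" and a=a and b=b, OF cA qs p's] that Pp' by auto
    next
      case False
      then show ?thesis using that Pp' by auto
    qed
  qed
  have fl: "flow a b Q pz = p'"
    unfolding flow_def
  proof (rule the_equality)
    show "?P p'" by (rule Pp')
    fix q assume "?P q" then show "q = p'" by (rule uniq)
  qed
  show "flow a b Q pz a = pz" unfolding fl using Pp' by simp
  show "fsol a b Q (flow a b Q pz)" unfolding fl fsol_iff by (rule p's)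
  fix q assume "fsol a b Q q" "q a = pz"
  then show "\<forall>t\<in>{a..b}. flow a b Q pz t = q t"
    unfolding fl fsol_iff using lin_unique[where A="fwdA Q" and a=a and b=b, OF cA p's] Pp' by auto
qed



lemma off_swap:
  fixes f :: "'x::finite \<Rightarrow> 'x \<Rightarrow> real"
  shows "(\<Sum>x\<in>UNIV. \<Sum>y\<in>UNIV - {x}. f x y) = (\<Sum>x\<in>UNIV. \<Sum>y\<in>UNIV - {x}. f y x)"
proof -
  have e: "(\<Sum>y\<in>UNIV - {x}. g y) = (\<Sum>y\<in>UNIV. if y = x then 0 else g y)" for g :: "'x \<Rightarrow> real" and x
  proof -
    have "(\<Sum>y\<in>UNIV. if y = x then 0 else g y) = (if x = x then 0 else g x) + (\<Sum>y\<in>UNIV - {x}. if y = x then 0 else g y)"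
      by (rule sum.remove) auto
    also have "(\<Sum>y\<in>UNIV - {x}. if y = x then 0 else g y) = (\<Sum>y\<in>UNIV - {x}. g y)"
      by (rule sum.cong) auto
    finally show ?thesis by simp
  qed
  have "(\<Sum>x\<in>UNIV. \<Sum>y\<in>UNIV - {x}. f x y) = (\<Sum>x\<in>UNIV. \<Sum>y\<in>UNIV. if y = x then 0 else f x y)"
    by (simp only: e)
  also have "\<dots> = (\<Sum>y\<in>UNIV. \<Sum>x\<in>UNIV. if y = x then 0 else f x y)"
    by (rule sum.swap)
  also have "\<dots> = (\<Sum>x\<in>UNIV. \<Sum>y\<in>UNIV. if y = x then 0 else f y x)"
    by (intro sum.cong refl) auto
  also have "\<dots> = (\<Sum>x\<in>UNIV. \<Sum>y\<in>UNIV - {x}. f y x)"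
    by (simp only: e)
  finally show ?thesis .
qed

lemma flow_nonneg:
  fixes Q :: "real \<Rightarrow> 'x::finite \<Rightarrow> 'x \<Rightarrow> real"
  assumes ab: "a \<le> b" and cont: "\<And>x y. continuous_on {a..b} (\<lambda>t. Q t x y)"
    and offd: "\<forall>t\<in>{a..b}. \<forall>x y. x \<noteq> y \<longrightarrow> 0 \<le> Q t x y"
    and p0: "\<forall>x. 0 \<le> pz x"
  shows "\<forall>t\<in>{a..b}. \<forall>x. 0 \<le> flow a b Q pz t x"
proof -
  have cA: "\<And>x y. continuous_on {a..b} (\<lambda>t. fwdA Q t x y)" by (rule fwdA_cont[OF cont])
  have offA: "\<forall>t\<in>{a..b}. \<forall>x y. x \<noteq> y \<longrightarrow> 0 \<le> fwdA Q t x y"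
    using offd by (auto simp: fwdA_def)
  have sol: "lin_sol a b (fwdA Q) (flow a b Q pz)"
    using flow_props(2)[where Q=Q and a=a and b=b, OF ab cont] fsol_iff by blast
  have fa: "flow a b Q pz a = pz" by (rule flow_props(1)[where Q=Q and a=a and b=b, OF ab cont])
  obtain c where c: "\<forall>t\<in>{a..b}. \<forall>x. exp (- (c * (t - a))) * flow a b Q pz a x \<le> flow a b Q pz t x"
    using lin_pos[OF ab cA offA sol] p0 fa by auto
  show ?thesis
  proof (intro ballI allI)
    fix t x assume t: "t \<in> {a..b}"
    have "0 \<le> exp (- (c * (t - a))) * flow a b Q pz a x" using fa p0 by simp
    also have "\<dots> \<le> flow a b Q pz t x" using c t by blast
    finally show "0 \<le> flow a b Q pz t x" .
  qed
qed

lemma flow_lin: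
  fixes Q :: "real \<Rightarrow> 'x::finite \<Rightarrow> 'x \<Rightarrow> real"
  assumes ab: "a \<le> b" and cont: "\<And>x y. continuous_on {a..b} (\<lambda>t. Q t x y)"
  shows "\<forall>t\<in>{a..b}. flow a b Q pz t = (\<lambda>z. \<Sum>x\<in>UNIV. pz x * flow a b Q (\<lambda>w. if w = x then 1 else 0) t z)"
proof -
  define F where "F x = flow a b Q (\<lambda>w. if w = x then 1 else 0)" for x
  define p where "p t z = (\<Sum>x\<in>UNIV. pz x * F x t z)" for t z
  have Fs: "lin_sol a b (fwdA Q) (F x)" for x
    unfolding F_def using flow_props(2)[where Q=Q and a=a and b=b, OF ab cont] fsol_iff by blast
  have ps: "lin_sol a b (fwdA Q) p"
    unfolding lin_sol_def
  proof (intro ballI allI)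
    fix t z assume t: "t \<in> {a..b}"
    have "((\<lambda>s. p s z) has_real_derivative (\<Sum>x\<in>UNIV. pz x * (\<Sum>y\<in>UNIV. fwdA Q t z y * F x t y))) (at t within {a..b})"
      unfolding p_def
    proof (rule DERIV_sum)
      fix x
      show "((\<lambda>s. pz x * F x s z) has_real_derivative pz x * (\<Sum>y\<in>UNIV. fwdA Q t z y * F x t y)) (at t within {a..b})"
        using Fs[of x] t unfolding lin_sol_def by (intro DERIV_cmult) auto
    qed
    moreover have "(\<Sum>x\<in>UNIV. pz x * (\<Sum>y\<in>UNIV. fwdA Q t z y * F x t y)) = (\<Sum>y\<in>UNIV. fwdA Q t z y * p t y)"
    proof -
      have "(\<Sum>x\<in>UNIV. pz x * (\<Sum>y\<in>UNIV. fwdA Q t z y * F x t y)) = (\<Sum>x\<in>UNIV. \<Sum>y\<in>UNIV. fwdA Q t z y * (pz x * F x t y))"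
        by (simp add: sum_distrib_left mult_ac)
      also have "\<dots> = (\<Sum>y\<in>UNIV. \<Sum>x\<in>UNIV. fwdA Q t z y * (pz x * F x t y))"
        by (rule sum.swap)
      also have "\<dots> = (\<Sum>y\<in>UNIV. fwdA Q t z y * p t y)"
        unfolding p_def by (simp add: sum_distrib_left)
      finally show ?thesis .
    qed
    ultimately show "((\<lambda>s. p s z) has_real_derivative (\<Sum>y\<in>UNIV. fwdA Q t z y * p t y)) (at t within {a..b})"
      by simp
  qed
  have pa: "p a = pz"
  proof
    fix z
    have "p a z = (\<Sum>x\<in>UNIV. pz x * (if z = x then 1 else 0))"
      unfolding p_def F_def using flow_props(1)[where Q=Q and a=a and b=b, OF ab cont] by simp
    also have "\<dots> = pz z" by (simp add: if_distrib cong: if_cong)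
    finally show "p a z = pz z" .
  qed
  have "\<forall>t\<in>{a..b}. flow a b Q pz t = p t"
    using flow_props(3)[where Q=Q and a=a and b=b, OF ab cont] ps pa fsol_iff by blast
  then show ?thesis unfolding p_def F_def by blast
qed

lemma mass_const:
  fixes Q :: "real \<Rightarrow> 'x::finite \<Rightarrow> 'x \<Rightarrow> real"
  assumes ab: "a \<le> b" and sol: "fsol a b Q p"
  shows "(\<Sum>x\<in>UNIV. p b x) = (\<Sum>x\<in>UNIV. p a x)"
proof -
  have d: "((\<lambda>s. \<Sum>x\<in>UNIV. p s x) has_real_derivative 0) (at t within {a..b})" if t: "t \<in> {a..b}" for t
  proof -
    have "((\<lambda>s. \<Sum>x\<in>UNIV. p s x) has_real_derivative
        (\<Sum>x\<in>UNIV. (\<Sum>y\<in>UNIV - {x}. Q t y x * p t y) - (\<Sum>y\<in>UNIV - {x}. Q t x y * p t x))) (at t within {a..b})"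
      using sol t unfolding fsol_def by (intro DERIV_sum) auto
    moreover have "(\<Sum>x\<in>UNIV. (\<Sum>y\<in>UNIV - {x}. Q t y x * p t y) - (\<Sum>y\<in>UNIV - {x}. Q t x y * p t x)) = 0"
      using off_swap[of "\<lambda>x y. Q t x y * p t x"] by (simp add: sum_subtractf)
    ultimately show ?thesis by simp
  qed
  have "(\<Sum>x\<in>UNIV. p b x) \<le> (\<Sum>x\<in>UNIV. p a x)"
    by (rule deriv_nonpos_le[where f'="\<lambda>_. 0"]) (use ab d in auto)
  moreover have "- (\<Sum>x\<in>UNIV. p b x) \<le> - (\<Sum>x\<in>UNIV. p a x)"
  proof (rule deriv_nonpos_le[where f="\<lambda>s. - (\<Sum>x\<in>UNIV. p s x)" and f'="\<lambda>_. 0"])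
    fix s assume "s \<in> {a..b}"
    then show "((\<lambda>s. - (\<Sum>x\<in>UNIV. p s x)) has_real_derivative 0) (at s within {a..b})"
      using DERIV_minus[OF d] by auto
  qed (use ab in auto)
  ultimately show ?thesis by linarith
qed

lemma backward_exists:
  fixes Qp :: "real \<Rightarrow> 'x::finite \<Rightarrow> 'x \<Rightarrow> real"
  assumes T: "0 \<le> T" and gen: "is_generator T Qp" and h: "\<forall>x. 0 < h x"
  shows "\<exists>\<phi>. (\<forall>x. \<phi> T x = h x) \<and> (\<forall>t\<in>{0..T}. \<forall>x. 0 < \<phi> t x) \<and>
     (\<forall>t\<in>{0..T}. \<forall>x. ((\<lambda>s. \<phi> s x) has_real_derivative - (\<Sum>y\<in>UNIV. Qp t x y * \<phi> t y)) (at t within {0..T}))"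
proof -
  define B where "B s x y = Qp (T - s) x y" for s x y
  have img: "(\<lambda>s. T - s) ` {0..T} = {0..T}"
  proof
    show "(\<lambda>s. T - s) ` {0..T} \<subseteq> {0..T}" by auto
    show "{0..T} \<subseteq> (\<lambda>s. T - s) ` {0..T}"
    proof
      fix u assume "u \<in> {0..T}"
      then show "u \<in> (\<lambda>s. T - s) ` {0..T}" by (intro image_eqI[of _ _ "T - u"]) auto
    qed
  qed
  have cQ: "continuous_on {0..T} (\<lambda>t. Qp t x y)" for x y using gen unfolding is_generator_def by blast
  have cB: "continuous_on {0..T} (\<lambda>s. B s x y)" for x y
    unfolding B_def by (rule continuous_on_compose2[OF cQ]) (auto intro!: continuous_intros)
  have offB: "\<forall>s\<in>{0..T}. \<forall>x y. x \<noteq> y \<longrightarrow> 0 \<le> B s x y"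
    using gen unfolding is_generator_def B_def by auto
  obtain \<psi> where \<psi>0: "\<psi> 0 = h" and \<psi>s: "lin_sol 0 T B \<psi>"
    using lin_exist[where A=B and a=0 and b=T and pz=h, OF T cB] by blast
  obtain c where c: "\<forall>s\<in>{0..T}. \<forall>x. exp (- (c * (s - 0))) * \<psi> 0 x \<le> \<psi> s x"
    using lin_pos[OF T cB offB \<psi>s] \<psi>0 h less_imp_le by metis
  define \<phi> where "\<phi> t x = \<psi> (T - t) x" for t x
  show ?thesis
  proof (intro exI[of _ \<phi>] conjI ballI allI)
    fix x show "\<phi> T x = h x" unfolding \<phi>_def using \<psi>0 by simp
  next
    fix t x assume t: "t \<in> {0..T}"
    then have "T - t \<in> {0..T}" by auto
    then have "exp (- (c * (T - t - 0))) * \<psi> 0 x \<le> \<psi> (T - t) x" using c by blast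
    moreover have "0 < exp (- (c * (T - t - 0))) * \<psi> 0 x" using h \<psi>0 by simp
    ultimately show "0 < \<phi> t x" unfolding \<phi>_def by linarith
  next
    fix t x assume t: "t \<in> {0..T}"
    then have Tt: "T - t \<in> {0..T}" by auto
    have d1: "((\<lambda>s. \<psi> s x) has_real_derivative (\<Sum>y\<in>UNIV. B (T - t) x y * \<psi> (T - t) y)) (at (T - t) within (\<lambda>s. T - s) ` {0..T})"
      unfolding img using \<psi>s Tt unfolding lin_sol_def by blast
    have d2: "((\<lambda>s. T - s) has_real_derivative -1) (at t within {0..T})"
      by (auto intro!: derivative_eq_intros)
    have "((\<lambda>s. \<psi> s x) \<circ> (\<lambda>s. T - s) has_real_derivative (\<Sum>y\<in>UNIV. B (T - t) x y * \<psi> (T - t) y) * -1) (at t within {0..T})"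
      by (rule DERIV_image_chain[OF d1 d2])
    then show "((\<lambda>s. \<phi> s x) has_real_derivative - (\<Sum>y\<in>UNIV. Qp t x y * \<phi> t y)) (at t within {0..T})"
      unfolding \<phi>_def B_def by (simp add: o_def)
  qed
qed

lemma nonneg_int0_negligible:
  fixes f :: "real \<Rightarrow> real"
  assumes int: "(f has_integral 0) S" and nonneg: "\<And>x. x \<in> S \<Longrightarrow> 0 \<le> f x"
  shows "negligible {x \<in> S. f x \<noteq> 0}"
proof -
  note intl = has_integral_integrable[OF int]
  have af: "f absolutely_integrable_on S"
    using nonneg by (intro absolutely_integrable_onI intl integrable_eq[OF intl]) simp
  have "0 = integral S f" using int by (simp add: integral_unique)
  also have "integral S f = set_lebesgue_integral lebesgue S f"
    using af by (intro set_lebesgue_integral_eq_integral(2)[symmetric])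
  finally have z: "(LINT x|lebesgue. indicator S x *\<^sub>R f x) = 0" unfolding set_lebesgue_integral_def by simp
  have "(AE x in lebesgue. indicator S x *\<^sub>R f x = 0)"
  proof -
    have "integrable lebesgue (\<lambda>x. indicat_real S x *\<^sub>R f x)"
      by (metis af set_integrable_def)
    moreover have "AE x in lebesgue. 0 \<le> indicat_real S x *\<^sub>R f x"
      using nonneg by (auto simp: indicator_def)
    ultimately show ?thesis using z integral_nonneg_eq_0_iff_AE by blast
  qed
  then obtain N where N: "{x \<in> space lebesgue. \<not> indicator S x *\<^sub>R f x = 0} \<subseteq> N" "emeasure lebesgue N = 0" "N \<in> sets lebesgue"
    by (rule AE_E)
  have "N \<in> null_sets lebesgue" using N(2,3) by (rule null_setsI)
  then have "negligible N" using negligible_iff_null_sets by blast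
  moreover have "{x \<in> S. f x \<noteq> 0} \<subseteq> N" using N(1) by (auto simp: indicator_def)
  ultimately show ?thesis by (rule negligible_subset)
qed

lemma cont_ae_zero:
  fixes g :: "real \<Rightarrow> real"
  assumes ab: "a < b" and cont: "continuous_on {a..b} g" and N: "negligible N"
    and z: "\<And>t. t \<in> {a..b} - N \<Longrightarrow> g t = 0"
  shows "\<forall>t\<in>{a..b}. g t = 0"
proof -
  have "((\<lambda>t. \<bar>g t\<bar>) has_integral 0) (cbox a b)"
    by (rule has_integral_spike[OF N, where f="\<lambda>_. 0"]) (use z in auto)
  moreover have "continuous_on (cbox a b) (\<lambda>t. \<bar>g t\<bar>)" using cont by (auto intro!: continuous_intros)
  ultimately have "\<forall>t\<in>cbox a b. \<bar>g t\<bar> = 0"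
    using has_integral_0_cbox_imp_0[of a b "\<lambda>t. \<bar>g t\<bar>"] ab by auto
  then show ?thesis by auto
qed



definition Dfun :: "real \<Rightarrow> real \<Rightarrow> real" where
  "Dfun q w = (if q = 0 then 0 else q * ln (q / w)) - q + w"

lemma Dfun_nonneg:
  assumes q: "0 \<le> q" and w: "0 \<le> w" and qw: "w = 0 \<longrightarrow> q = 0"
  shows "0 \<le> Dfun q w"
proof (cases "q = 0")
  case True then show ?thesis using w by (simp add: Dfun_def)
next
  case False
  then have q0: "0 < q" using q by simp
  then have w0: "0 < w" using w qw by force
  have "ln (w / q) \<le> w / q - 1" using q0 w0 by (intro ln_le_minus_one) simp
  then have "q * ln (w / q) \<le> q * (w / q - 1)" using q0 by (intro mult_left_mono) auto
  also have "\<dots> = w - q" using q0 by (simp add: field_simps)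
  finally have "q * ln (w / q) \<le> w - q" .
  moreover have "ln (q / w) = - ln (w / q)" using q0 w0 by (simp add: ln_div)
  ultimately show ?thesis using False by (simp add: Dfun_def)
qed

lemma Dfun_zero:
  assumes q: "0 \<le> q" and w: "0 \<le> w" and qw: "w = 0 \<longrightarrow> q = 0" and z: "Dfun q w = 0"
  shows "q = w"
proof (cases "q = 0")
  case True then show ?thesis using z by (simp add: Dfun_def)
next
  case False
  then have q0: "0 < q" using q by simp
  then have w0: "0 < w" using w qw by force
  have "ln (q / w) = - ln (w / q)" using q0 w0 by (simp add: ln_div)
  then have "q * ln (w / q) = w - q" using z False by (simp add: Dfun_def)
  then have "ln (w / q) = (w - q) / q" using q0 by (simp add: field_simps)
  also have "\<dots> = w / q - 1" using q0 by (simp add: field_simps)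
  finally have "w / q = 1" using q0 w0 by (intro ln_eq_minus_one) auto
  then show ?thesis using q0 by simp
qed

lemma Dfun_self: "Dfun w w = 0"
  by (simp add: Dfun_def)

lemma term_id:
  fixes \<alpha> fx fy q qp :: real
  assumes a: "0 < \<alpha>" and fx: "0 < fx" and fy: "0 < fy" and q: "0 \<le> q" and qp: "0 \<le> qp"
    and ac: "qp = 0 \<longrightarrow> q = 0"
  shows "q * (\<alpha> * ln fy - \<alpha> * ln fx) - \<alpha> * (qp * (fy / fx - 1))
       = \<alpha> * ((qp - q + (if q = 0 then 0 else q * ln (q / qp))) - Dfun q (qp * fy / fx))"
proof (cases "q = 0")
  case True
  then show ?thesis using fx by (simp add: Dfun_def field_simps)
next
  case False
  then have q0: "0 < q" using q by simp
  then have qp0: "0 < qp" using qp ac by force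
  have l1: "ln (q / qp) = ln q - ln qp" using q0 qp0 by (simp add: ln_div)
  have l2: "ln (q / (qp * fy / fx)) = ln q - ln qp - ln fy + ln fx"
    using q0 qp0 fx fy by (simp add: ln_div ln_mult)
  have if1: "(if q = 0 then 0 else q * ln (q / qp)) = q * (ln q - ln qp)" using False l1 by simp
  have if2: "(if q = 0 then 0 else q * ln (q / (qp * fy / fx))) = q * (ln q - ln qp - ln fy + ln fx)"
    using False l2 by simp
  show ?thesis unfolding Dfun_def if1 if2 using fx by (simp add: field_simps)
qed


definition Dv :: "(real \<Rightarrow> 'x::finite \<Rightarrow> 'x \<Rightarrow> real) \<Rightarrow> (real \<Rightarrow> 'x \<Rightarrow> 'x \<Rightarrow> real) \<Rightarrow> (real \<Rightarrow> 'x \<Rightarrow> real) \<Rightarrow> real \<Rightarrow> 'x \<Rightarrow> real" where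
  "Dv Qp Q \<phi> t x = (\<Sum>y\<in>UNIV - {x}. Dfun (Q t x y) (Qp t x y * \<phi> t y / \<phi> t x))"

lemma Dv_nonneg:
  fixes Qp Q :: "real \<Rightarrow> 'x::finite \<Rightarrow> 'x \<Rightarrow> real"
  assumes "\<forall>x y. x \<noteq> y \<longrightarrow> 0 \<le> Q t x y" "\<forall>x y. x \<noteq> y \<longrightarrow> 0 \<le> Qp t x y"
    "\<forall>x y. x \<noteq> y \<longrightarrow> Qp t x y = 0 \<longrightarrow> Q t x y = 0" "\<forall>x. 0 < \<phi> t x"
  shows "0 \<le> Dv Qp Q \<phi> t x"
  unfolding Dv_def
proof (rule sum_nonneg)
  fix y assume y: "y \<in> UNIV - {x}"
  show "0 \<le> Dfun (Q t x y) (Qp t x y * \<phi> t y / \<phi> t x)"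
  proof (rule Dfun_nonneg)
    have yx: "x \<noteq> y" using y by auto
    have p1: "0 < \<phi> t x" "0 < \<phi> t y" using assms(4) by auto
    show "0 \<le> Q t x y" using assms(1) yx by auto
    have "0 \<le> Qp t x y" using assms(2) yx by auto
    then show "0 \<le> Qp t x y * \<phi> t y / \<phi> t x" using p1 by simp
    show "Qp t x y * \<phi> t y / \<phi> t x = 0 \<longrightarrow> Q t x y = 0" using p1 assms(3) yx by simp
  qed
qed

lemma verif_point:
  fixes Qp Q :: "real \<Rightarrow> 'x::finite \<Rightarrow> 'x \<Rightarrow> real" and P F :: "'x \<Rightarrow> real"
  assumes a: "0 < \<alpha>" and Fp: "\<forall>x. 0 < F x"
    and offp: "\<forall>x y. x \<noteq> y \<longrightarrow> 0 \<le> Qp t x y" and diagp: "\<forall>x. Qp t x x = - (\<Sum>y\<in>UNIV - {x}. Qp t x y)"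
    and off: "\<forall>x y. x \<noteq> y \<longrightarrow> 0 \<le> Q t x y"
    and ac: "\<forall>x y. x \<noteq> y \<longrightarrow> Qp t x y = 0 \<longrightarrow> Q t x y = 0"
  shows "(\<Sum>x\<in>UNIV. ((\<Sum>y\<in>UNIV - {x}. Q t y x * P y) - (\<Sum>y\<in>UNIV - {x}. Q t x y * P x)) * (\<alpha> * ln (F x))
            + (\<alpha> * (inverse (F x) * - (\<Sum>y\<in>UNIV. Qp t x y * F y))) * P x)
       = \<alpha> * (\<Sum>x\<in>UNIV. P x * pen Qp Q t x) - \<alpha> * (\<Sum>x\<in>UNIV. P x * Dv Qp Q (\<lambda>_. F) t x)"
proof -
  define E where "E x = (\<Sum>y\<in>UNIV - {x}. Q t x y * (\<alpha> * ln (F y) - \<alpha> * ln (F x)) - \<alpha> * (Qp t x y * (F y / F x - 1)))" for x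
  have S1: "(\<Sum>y\<in>UNIV. Qp t x y * F y) = (\<Sum>y\<in>UNIV - {x}. Qp t x y * (F y - F x))" for x
  proof -
    have "(\<Sum>y\<in>UNIV. Qp t x y * F y) = Qp t x x * F x + (\<Sum>y\<in>UNIV - {x}. Qp t x y * F y)"
      by (rule sum.remove) auto
    also have "\<dots> = (\<Sum>y\<in>UNIV - {x}. Qp t x y * F y) - (\<Sum>y\<in>UNIV - {x}. Qp t x y * F x)"
      using diagp by (simp add: sum_distrib_right)
    also have "\<dots> = (\<Sum>y\<in>UNIV - {x}. Qp t x y * (F y - F x))"
      by (simp add: sum_subtractf right_diff_distrib)
    finally show ?thesis .
  qed
  have S2: "(\<alpha> * (inverse (F x) * - (\<Sum>y\<in>UNIV. Qp t x y * F y))) = - (\<Sum>y\<in>UNIV - {x}. \<alpha> * (Qp t x y * (F y / F x - 1)))" for x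
  proof -
    have Fx: "F x \<noteq> 0" using Fp by (metis less_irrefl)
    have "(\<alpha> * (inverse (F x) * - (\<Sum>y\<in>UNIV. Qp t x y * F y))) = - (\<Sum>y\<in>UNIV - {x}. \<alpha> * (inverse (F x) * (Qp t x y * (F y - F x))))"
      unfolding S1 by (simp add: sum_distrib_left)
    also have "\<dots> = - (\<Sum>y\<in>UNIV - {x}. \<alpha> * (Qp t x y * (F y / F x - 1)))"
      using Fx by (intro arg_cong[where f=uminus] sum.cong refl) (simp add: field_simps)
    finally show ?thesis .
  qed
  have S3: "(\<Sum>x\<in>UNIV. ((\<Sum>y\<in>UNIV - {x}. Q t y x * P y) - (\<Sum>y\<in>UNIV - {x}. Q t x y * P x)) * (\<alpha> * ln (F x)))
      = (\<Sum>x\<in>UNIV. \<Sum>y\<in>UNIV - {x}. P x * (Q t x y * (\<alpha> * ln (F y) - \<alpha> * ln (F x))))"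
  proof -
    have "(\<Sum>x\<in>UNIV. ((\<Sum>y\<in>UNIV - {x}. Q t y x * P y) - (\<Sum>y\<in>UNIV - {x}. Q t x y * P x)) * (\<alpha> * ln (F x)))
      = (\<Sum>x\<in>UNIV. \<Sum>y\<in>UNIV - {x}. Q t y x * P y * (\<alpha> * ln (F x))) - (\<Sum>x\<in>UNIV. \<Sum>y\<in>UNIV - {x}. Q t x y * P x * (\<alpha> * ln (F x)))"
      by (simp add: left_diff_distrib sum_distrib_right sum_subtractf)
    also have "(\<Sum>x\<in>UNIV. \<Sum>y\<in>UNIV - {x}. Q t y x * P y * (\<alpha> * ln (F x))) = (\<Sum>x\<in>UNIV. \<Sum>y\<in>UNIV - {x}. Q t x y * P x * (\<alpha> * ln (F y)))"
      by (rule off_swap)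
    also have "(\<Sum>x\<in>UNIV. \<Sum>y\<in>UNIV - {x}. Q t x y * P x * (\<alpha> * ln (F y))) - (\<Sum>x\<in>UNIV. \<Sum>y\<in>UNIV - {x}. Q t x y * P x * (\<alpha> * ln (F x)))
      = (\<Sum>x\<in>UNIV. \<Sum>y\<in>UNIV - {x}. P x * (Q t x y * (\<alpha> * ln (F y) - \<alpha> * ln (F x))))"
      by (simp add: sum_subtractf[symmetric] right_diff_distrib mult_ac)
    finally show ?thesis .
  qed
  have A: "(\<Sum>x\<in>UNIV. ((\<Sum>y\<in>UNIV - {x}. Q t y x * P y) - (\<Sum>y\<in>UNIV - {x}. Q t x y * P x)) * (\<alpha> * ln (F x))
            + (\<alpha> * (inverse (F x) * - (\<Sum>y\<in>UNIV. Qp t x y * F y))) * P x)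
      = (\<Sum>x\<in>UNIV. P x * E x)"
  proof -
    have "(\<Sum>x\<in>UNIV. ((\<Sum>y\<in>UNIV - {x}. Q t y x * P y) - (\<Sum>y\<in>UNIV - {x}. Q t x y * P x)) * (\<alpha> * ln (F x))
            + (\<alpha> * (inverse (F x) * - (\<Sum>y\<in>UNIV. Qp t x y * F y))) * P x)
       = (\<Sum>x\<in>UNIV. \<Sum>y\<in>UNIV - {x}. P x * (Q t x y * (\<alpha> * ln (F y) - \<alpha> * ln (F x))))
         + (\<Sum>x\<in>UNIV. - (\<Sum>y\<in>UNIV - {x}. \<alpha> * (Qp t x y * (F y / F x - 1))) * P x)"
      unfolding sum.distrib S3 S2 ..
    also have "\<dots> = (\<Sum>x\<in>UNIV. P x * E x)"
      unfolding E_def sum.distrib[symmetric]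
      by (intro sum.cong refl) (simp add: sum_distrib_left sum_subtractf right_diff_distrib mult_ac)
    finally show ?thesis .
  qed
  have B: "E x = \<alpha> * pen Qp Q t x - \<alpha> * Dv Qp Q (\<lambda>_. F) t x" for x
  proof -
    have "E x = (\<Sum>y\<in>UNIV - {x}. \<alpha> * ((Qp t x y - Q t x y + (if Q t x y = 0 then 0 else Q t x y * ln (Q t x y / Qp t x y)))
                  - Dfun (Q t x y) (Qp t x y * F y / F x)))"
      unfolding E_def
    proof (rule sum.cong[OF refl])
      fix y assume y: "y \<in> UNIV - {x}"
      show "Q t x y * (\<alpha> * ln (F y) - \<alpha> * ln (F x)) - \<alpha> * (Qp t x y * (F y / F x - 1))
          = \<alpha> * ((Qp t x y - Q t x y + (if Q t x y = 0 then 0 else Q t x y * ln (Q t x y / Qp t x y)))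
                  - Dfun (Q t x y) (Qp t x y * F y / F x))"
        using y a Fp offp off ac by (intro term_id) auto
    qed
    also have "\<dots> = \<alpha> * pen Qp Q t x - \<alpha> * Dv Qp Q (\<lambda>_. F) t x"
      unfolding pen_def Dv_def by (simp add: sum_distrib_left sum_subtractf right_diff_distrib)
    finally show ?thesis .
  qed
  show ?thesis unfolding A B
    by (simp add: right_diff_distrib sum_subtractf sum_distrib_left mult_ac)
qed


lemma verif:
  fixes Qp Q :: "real \<Rightarrow> 'x::finite \<Rightarrow> 'x \<Rightarrow> real" and \<phi> p :: "real \<Rightarrow> 'x \<Rightarrow> real"
  assumes T: "0 \<le> T" and a: "0 < \<alpha>" and genp: "is_generator T Qp"
    and offQ: "\<forall>t\<in>{0..T}. \<forall>x y. x \<noteq> y \<longrightarrow> 0 \<le> Q t x y"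
    and ac: "\<forall>t\<in>{0..T}. \<forall>x y. x \<noteq> y \<longrightarrow> Qp t x y = 0 \<longrightarrow> Q t x y = 0"
    and \<phi>p: "\<forall>t\<in>{0..T}. \<forall>x. 0 < \<phi> t x"
    and \<phi>d: "\<forall>t\<in>{0..T}. \<forall>x. ((\<lambda>s. \<phi> s x) has_real_derivative - (\<Sum>y\<in>UNIV. Qp t x y * \<phi> t y)) (at t within {0..T})"
    and sol: "fsol 0 T Q p"
  shows "((\<lambda>t. \<alpha> * (\<Sum>x\<in>UNIV. p t x * pen Qp Q t x) - \<alpha> * (\<Sum>x\<in>UNIV. p t x * Dv Qp Q \<phi> t x)) has_integral
           ((\<Sum>x\<in>UNIV. p T x * (\<alpha> * ln (\<phi> T x))) - (\<Sum>x\<in>UNIV. p 0 x * (\<alpha> * ln (\<phi> 0 x))))) {0..T}"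
proof (rule fundamental_theorem_of_calculus[OF T])
  fix t assume t: "t \<in> {0..T}"
  have "((\<lambda>s. \<Sum>x\<in>UNIV. p s x * (\<alpha> * ln (\<phi> s x))) has_real_derivative
      (\<Sum>x\<in>UNIV. ((\<Sum>y\<in>UNIV - {x}. Q t y x * p t y) - (\<Sum>y\<in>UNIV - {x}. Q t x y * p t x)) * (\<alpha> * ln (\<phi> t x))
            + (\<alpha> * (inverse (\<phi> t x) * - (\<Sum>y\<in>UNIV. Qp t x y * \<phi> t y))) * p t x)) (at t within {0..T})"
  proof (rule DERIV_sum)
    fix x
    have d1: "((\<lambda>s. p s x) has_real_derivative ((\<Sum>y\<in>UNIV - {x}. Q t y x * p t y) - (\<Sum>y\<in>UNIV - {x}. Q t x y * p t x))) (at t within {0..T})"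
      using sol t unfolding fsol_def by blast
    have dl: "DERIV ln (\<phi> t x) :> inverse (\<phi> t x)" using \<phi>p t by (intro DERIV_ln) auto
    have d2: "((\<lambda>s. \<alpha> * ln (\<phi> s x)) has_real_derivative \<alpha> * (inverse (\<phi> t x) * - (\<Sum>y\<in>UNIV. Qp t x y * \<phi> t y))) (at t within {0..T})"
    proof (rule DERIV_cmult)
      have d0: "((\<lambda>s. \<phi> s x) has_real_derivative - (\<Sum>y\<in>UNIV. Qp t x y * \<phi> t y)) (at t within {0..T})"
        using \<phi>d t by blast
      show "((\<lambda>s. ln (\<phi> s x)) has_real_derivative inverse (\<phi> t x) * - (\<Sum>y\<in>UNIV. Qp t x y * \<phi> t y)) (at t within {0..T})"
        using DERIV_chain2[where f=ln and g="\<lambda>s. \<phi> s x", OF dl d0] by simp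
    qed
    show "((\<lambda>s. p s x * (\<alpha> * ln (\<phi> s x))) has_real_derivative
        ((\<Sum>y\<in>UNIV - {x}. Q t y x * p t y) - (\<Sum>y\<in>UNIV - {x}. Q t x y * p t x)) * (\<alpha> * ln (\<phi> t x))
            + (\<alpha> * (inverse (\<phi> t x) * - (\<Sum>y\<in>UNIV. Qp t x y * \<phi> t y))) * p t x) (at t within {0..T})"
      by (rule DERIV_mult[OF d1 d2])
  qed
  moreover have "(\<Sum>x\<in>UNIV. ((\<Sum>y\<in>UNIV - {x}. Q t y x * p t y) - (\<Sum>y\<in>UNIV - {x}. Q t x y * p t x)) * (\<alpha> * ln (\<phi> t x))
            + (\<alpha> * (inverse (\<phi> t x) * - (\<Sum>y\<in>UNIV. Qp t x y * \<phi> t y))) * p t x)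
      = \<alpha> * (\<Sum>x\<in>UNIV. p t x * pen Qp Q t x) - \<alpha> * (\<Sum>x\<in>UNIV. p t x * Dv Qp Q (\<lambda>_. \<phi> t) t x)"
    using genp t offQ ac \<phi>p a unfolding is_generator_def
    by (intro verif_point) auto
  moreover have "Dv Qp Q (\<lambda>_. \<phi> t) t x = Dv Qp Q \<phi> t x" for x unfolding Dv_def by simp
  ultimately show "((\<lambda>s. \<Sum>x\<in>UNIV. p s x * (\<alpha> * ln (\<phi> s x))) has_vector_derivative
      \<alpha> * (\<Sum>x\<in>UNIV. p t x * pen Qp Q t x) - \<alpha> * (\<Sum>x\<in>UNIV. p t x * Dv Qp Q \<phi> t x)) (at t within {0..T})"
    by (simp add: has_real_derivative_iff_has_vector_derivative)
qed



lemma gibbs: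
  fixes P c f :: "'x::finite \<Rightarrow> real"
  assumes Pd: "is_distr P" and c0: "\<forall>x. 0 \<le> c x" and f0: "\<forall>x. 0 < f x"
    and ac: "\<forall>x. c x = 0 \<longrightarrow> P x = 0" and Z0: "0 < (\<Sum>x\<in>UNIV. c x * f x)"
  shows "(\<Sum>x\<in>UNIV. P x * ln (f x)) - KL P c \<le> ln (\<Sum>x\<in>UNIV. c x * f x)"
    and "(\<Sum>x\<in>UNIV. P x * ln (f x)) - KL P c = ln (\<Sum>x\<in>UNIV. c x * f x) \<Longrightarrow>
         \<forall>x. P x = c x * f x / (\<Sum>y\<in>UNIV. c y * f y)"
proof -
  define Z where "Z = (\<Sum>x\<in>UNIV. c x * f x)"
  define \<pi> where "\<pi> x = c x * f x / Z" for x
  define g where "g x = (if P x = 0 then \<pi> x else \<pi> x - P x - P x * ln (\<pi> x / P x))" for x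
  have Zp: "0 < Z" using Z0 Z_def by simp
  have P0: "0 \<le> P x" for x using Pd unfolding is_distr_def by auto
  have P1: "(\<Sum>x\<in>UNIV. P x) = 1" using Pd unfolding is_distr_def by auto
  have \<pi>0: "0 \<le> \<pi> x" for x unfolding \<pi>_def using c0 f0 Zp by (simp add: less_imp_le)
  have \<pi>1: "(\<Sum>x\<in>UNIV. \<pi> x) = 1" unfolding \<pi>_def using Zp by (simp add: sum_divide_distrib[symmetric] Z_def)
  have g0: "0 \<le> g x" for x
  proof (cases "P x = 0")
    case True then show ?thesis unfolding g_def using \<pi>0 by simp
  next
    case False
    then have Pp: "0 < P x" using P0[of x] by simp
    have cp: "0 < c x" using ac c0 False by (metis less_eq_real_def)
    have \<pi>p: "0 < \<pi> x" unfolding \<pi>_def using cp f0 Zp by simp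
    have "ln (\<pi> x / P x) \<le> \<pi> x / P x - 1" using \<pi>p Pp by (intro ln_le_minus_one) simp
    then have "P x * ln (\<pi> x / P x) \<le> P x * (\<pi> x / P x - 1)" using Pp by (intro mult_left_mono) auto
    also have "\<dots> = \<pi> x - P x" using Pp by (simp add: field_simps)
    finally show ?thesis unfolding g_def using False by simp
  qed
  have tm: "P x * ln (f x) - (if P x = 0 then 0 else P x * ln (P x / c x)) = P x * ln Z - g x + \<pi> x - P x" for x
  proof (cases "P x = 0")
    case True then show ?thesis unfolding g_def by simp
  next
    case False
    then have Pp: "0 < P x" using P0[of x] by simp
    have cp: "0 < c x" using ac c0 False by (metis less_eq_real_def)
    have \<pi>p: "0 < \<pi> x" unfolding \<pi>_def using cp f0 Zp by simp
    have l1: "ln (P x / c x) = ln (P x) - ln (c x)" using Pp cp by (simp add: ln_div)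
    have l2: "ln (\<pi> x / P x) = ln (c x) + ln (f x) - ln Z - ln (P x)"
    proof -
      have fxp: "0 < f x" using f0 by simp
      show ?thesis unfolding \<pi>_def using Pp cp fxp Zp by (simp add: ln_div ln_mult)
    qed
    show ?thesis unfolding g_def using False by (simp add: l1 l2 algebra_simps)
  qed
  have key: "(\<Sum>x\<in>UNIV. P x * ln (f x)) - KL P c = ln Z - (\<Sum>x\<in>UNIV. g x)"
  proof -
    have "(\<Sum>x\<in>UNIV. P x * ln (f x)) - KL P c = (\<Sum>x\<in>UNIV. P x * ln (f x) - (if P x = 0 then 0 else P x * ln (P x / c x)))"
      unfolding KL_def by (simp add: sum_subtractf)
    also have "\<dots> = (\<Sum>x\<in>UNIV. P x * ln Z - g x + \<pi> x - P x)" unfolding tm ..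
    also have "\<dots> = ln Z * (\<Sum>x\<in>UNIV. P x) - (\<Sum>x\<in>UNIV. g x) + (\<Sum>x\<in>UNIV. \<pi> x) - (\<Sum>x\<in>UNIV. P x)"
      by (simp add: sum.distrib sum_subtractf sum_distrib_left mult_ac)
    also have "\<dots> = ln Z - (\<Sum>x\<in>UNIV. g x)" using P1 \<pi>1 by simp
    finally show ?thesis .
  qed
  have sg: "0 \<le> (\<Sum>x\<in>UNIV. g x)" by (intro sum_nonneg g0)
  show "(\<Sum>x\<in>UNIV. P x * ln (f x)) - KL P c \<le> ln (\<Sum>x\<in>UNIV. c x * f x)"
    using key sg Z_def by simp
  assume eq: "(\<Sum>x\<in>UNIV. P x * ln (f x)) - KL P c = ln (\<Sum>x\<in>UNIV. c x * f x)"
  then have "(\<Sum>x\<in>UNIV. g x) = 0" using key Z_def by simp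
  then have gz: "g x = 0" for x using sum_nonneg_eq_0_iff[of UNIV g] g0 by simp
  show "\<forall>x. P x = c x * f x / (\<Sum>y\<in>UNIV. c y * f y)"
  proof
    fix x
    show "P x = c x * f x / (\<Sum>y\<in>UNIV. c y * f y)"
    proof (cases "P x = 0")
      case True
      then have "\<pi> x = 0" using gz[of x] unfolding g_def by simp
      then show ?thesis using True unfolding \<pi>_def Z_def by simp
    next
      case False
      then have Pp: "0 < P x" using P0[of x] by simp
      have cp: "0 < c x" using ac c0 False by (metis less_eq_real_def)
      have \<pi>p: "0 < \<pi> x" unfolding \<pi>_def using cp f0 Zp by simp
      have "P x * ln (\<pi> x / P x) = \<pi> x - P x" using gz[of x] False unfolding g_def by simp
      then have "ln (\<pi> x / P x) = \<pi> x / P x - 1" using Pp by (simp add: field_simps)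
      then have "\<pi> x / P x = 1" using \<pi>p Pp by (intro ln_eq_minus_one) auto
      then have "P x = \<pi> x" using Pp by simp
      then show ?thesis unfolding \<pi>_def Z_def .
    qed
  qed
qed

lemma gibbs_eq:
  fixes c f :: "'x::finite \<Rightarrow> real"
  assumes c0: "\<forall>x. 0 \<le> c x" and f0: "\<forall>x. 0 < f x" and Z0: "0 < (\<Sum>x\<in>UNIV. c x * f x)"
  defines "\<pi> \<equiv> (\<lambda>x. c x * f x / (\<Sum>y\<in>UNIV. c y * f y))"
  shows "(\<Sum>x\<in>UNIV. \<pi> x * ln (f x)) - KL \<pi> c = ln (\<Sum>x\<in>UNIV. c x * f x)"
proof -
  define Z where "Z = (\<Sum>x\<in>UNIV. c x * f x)"
  have Zp: "0 < Z" using Z0 Z_def by simp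
  have \<pi>1: "(\<Sum>x\<in>UNIV. \<pi> x) = 1" unfolding \<pi>_def using Zp by (simp add: sum_divide_distrib[symmetric] Z_def)
  have t: "\<pi> x * ln (f x) - (if \<pi> x = 0 then 0 else \<pi> x * ln (\<pi> x / c x)) = \<pi> x * ln Z" for x
  proof (cases "\<pi> x = 0")
    case True then show ?thesis by simp
  next
    case False
    then have cp: "c x \<noteq> 0" unfolding \<pi>_def by auto
    then have cp': "0 < c x" using c0 by (metis less_eq_real_def)
    have "\<pi> x / c x = f x / Z" unfolding \<pi>_def Z_def using cp by simp
    moreover have "f x \<noteq> 0" "Z \<noteq> 0" using f0 Zp by (auto simp: less_imp_neq[symmetric])
    ultimately have e: "ln (\<pi> x / c x) = ln (f x) - ln Z" by (simp add: ln_div)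
    show ?thesis by (simp only: e if_not_P[OF False]) (simp add: algebra_simps)
  qed
  have "(\<Sum>x\<in>UNIV. \<pi> x * ln (f x)) - KL \<pi> c = (\<Sum>x\<in>UNIV. \<pi> x * ln (f x) - (if \<pi> x = 0 then 0 else \<pi> x * ln (\<pi> x / c x)))"
    unfolding KL_def by (simp add: sum_subtractf)
  also have "\<dots> = (\<Sum>x\<in>UNIV. \<pi> x) * ln Z" unfolding t by (simp add: sum_distrib_right)
  finally show ?thesis using \<pi>1 Z_def by simp
qed



theorem mainTheorem4:
  fixes T \<alpha> :: real
    and r :: "'x::finite \<Rightarrow> real"
    and Qpre Qs :: "real \<Rightarrow> 'x \<Rightarrow> 'x \<Rightarrow> real"
    and plim P0s :: "'x \<Rightarrow> real"
  assumes "T > 0" and "\<alpha> > 0"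
    and "is_generator T Qpre"
    and "is_distr plim"
    and "admissible T Qpre plim Qs P0s"
    and "\<forall>Q P0. admissible T Qpre plim Q P0 \<longrightarrow>
               objective T \<alpha> r Qpre plim Q P0 \<le> objective T \<alpha> r Qpre plim Qs P0s"
  shows "(\<forall>x. P0s x = exp (value_fn T \<alpha> r Qpre Qs 0 x / \<alpha>) * plim x
                 / (\<Sum>y\<in>UNIV. exp (value_fn T \<alpha> r Qpre Qs 0 y / \<alpha>) * plim y))
       \<and> (\<forall>x. marginal T Qs P0s T x = exp (r x / \<alpha>) * marginal T Qpre plim T x
                 / (\<Sum>y\<in>UNIV. exp (r y / \<alpha>) * marginal T Qpre plim T y))"
proof -
  note Tp = assms(1) and ap = assms(2) and genp = assms(3) and pd = assms(4) and adm = assms(5) and opt = assms(6)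
  have T0: "0 \<le> T" using Tp by simp
  have genS: "is_generator T Qs" and dP0: "is_distr P0s" and acP: "\<forall>x. plim x = 0 \<longrightarrow> P0s x = 0"
    and acQ: "\<forall>t\<in>{0..T}. \<forall>x y. x \<noteq> y \<longrightarrow> Qpre t x y = 0 \<longrightarrow> Qs t x y = 0"
    and intS: "(\<lambda>t. \<Sum>x\<in>UNIV. marginal T Qs P0s t x * pen Qpre Qs t x) integrable_on {0..T}"
    using adm unfolding admissible_def by auto
  have cQp: "continuous_on {0..T} (\<lambda>t. Qpre t x y)" for x y using genp unfolding is_generator_def by blast
  have cQs: "continuous_on {0..T} (\<lambda>t. Qs t x y)" for x y using genS unfolding is_generator_def by blast
  have offp: "\<forall>t\<in>{0..T}. \<forall>x y. x \<noteq> y \<longrightarrow> 0 \<le> Qpre t x y" using genp unfolding is_generator_def by blast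
  have offS: "\<forall>t\<in>{0..T}. \<forall>x y. x \<noteq> y \<longrightarrow> 0 \<le> Qs t x y" using genS unfolding is_generator_def by blast
  have diagp: "\<forall>t\<in>{0..T}. \<forall>x. Qpre t x x = - (\<Sum>y\<in>UNIV - {x}. Qpre t x y)" using genp unfolding is_generator_def by blast
  have plim0: "0 \<le> plim x" for x using pd unfolding is_distr_def by blast
  have P00: "0 \<le> P0s x" for x using dP0 unfolding is_distr_def by blast
  obtain \<phi> where \<phi>T: "\<forall>x. \<phi> T x = exp (r x / \<alpha>)" and \<phi>p: "\<forall>t\<in>{0..T}. \<forall>x. 0 < \<phi> t x"
    and \<phi>d: "\<forall>t\<in>{0..T}. \<forall>x. ((\<lambda>s. \<phi> s x) has_real_derivative - (\<Sum>y\<in>UNIV. Qpre t x y * \<phi> t y)) (at t within {0..T})"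
    using backward_exists[OF T0 genp, of "\<lambda>x. exp (r x / \<alpha>)"] by auto
  have c\<phi>: "continuous_on {0..T} (\<lambda>t. \<phi> t x)" for x
    unfolding continuous_on_eq_continuous_within using \<phi>d DERIV_continuous by blast
  have \<phi>T': "\<phi> T x = exp (r x / \<alpha>)" for x using \<phi>T by blast
  have \<phi>0p: "0 < \<phi> 0 x" for x using \<phi>p T0 by auto
  have lnT: "\<alpha> * ln (\<phi> T x) = r x" for x using \<phi>T ap by simp
  define Z where "Z = (\<Sum>x\<in>UNIV. plim x * \<phi> 0 x)"
  have Zp: "0 < Z"
  proof -
    obtain x0 where x0: "0 < plim x0"
    proof (rule ccontr)
      assume "\<not> thesis"
      then have "\<forall>x. plim x = 0" using plim0 that by (metis less_eq_real_def)
      then show False using pd unfolding is_distr_def by simp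
    qed
    have nn: "0 \<le> plim i * \<phi> 0 i" for i using plim0[of i] \<phi>0p[of i] by simp
    show ?thesis unfolding Z_def
      using x0 \<phi>0p nn by (intro sum_pos2[where i=x0]) auto
  qed
  have Zn: "Z \<noteq> 0" using Zp by simp
  define \<pi> where "\<pi> x = plim x * \<phi> 0 x / Z" for x
  \<comment> \<open>Step 3: the optimal generator u\<close>
  define u where "u t x y = (if x = y then - (\<Sum>z\<in>UNIV - {x}. Qpre t x z * \<phi> t z / \<phi> t x)
                             else Qpre t x y * \<phi> t y / \<phi> t x)" for t x y
  have cu: "continuous_on {0..T} (\<lambda>t. u t x y)" for x y
  proof (cases "x = y")
    case True
    show ?thesis unfolding u_def using True \<phi>p
      by (auto intro!: continuous_intros cQp c\<phi> simp: less_imp_neq[symmetric])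
  next
    case False
    show ?thesis unfolding u_def using False \<phi>p
      by (auto intro!: continuous_intros cQp c\<phi> simp: less_imp_neq[symmetric])
  qed
  have offu: "\<forall>t\<in>{0..T}. \<forall>x y. x \<noteq> y \<longrightarrow> 0 \<le> u t x y"
  proof (intro ballI allI impI)
    fix t and x y :: 'x assume t: "t \<in> {0..T}" and xy: "x \<noteq> y"
    have "0 \<le> Qpre t x y" "0 < \<phi> t y" "0 < \<phi> t x" using offp \<phi>p t xy by auto
    then show "0 \<le> u t x y" unfolding u_def using xy by simp
  qed
  have genu: "is_generator T u"
    unfolding is_generator_def
  proof (intro conjI)
    show "\<forall>t\<in>{0..T}. \<forall>x y. x \<noteq> y \<longrightarrow> 0 \<le> u t x y" by (rule offu)
    show "\<forall>t\<in>{0..T}. \<forall>x. u t x x = - (\<Sum>y\<in>UNIV - {x}. u t x y)"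
    proof (intro ballI allI)
      fix t x
      have "(\<Sum>y\<in>UNIV - {x}. u t x y) = (\<Sum>y\<in>UNIV - {x}. Qpre t x y * \<phi> t y / \<phi> t x)"
        by (rule sum.cong) (auto simp: u_def)
      then show "u t x x = - (\<Sum>y\<in>UNIV - {x}. u t x y)" by (simp add: u_def)
    qed
    show "\<forall>x y. continuous_on {0..T} (\<lambda>t. u t x y)" using cu by blast
  qed
  have acu: "\<forall>t\<in>{0..T}. \<forall>x y. x \<noteq> y \<longrightarrow> Qpre t x y = 0 \<longrightarrow> u t x y = 0"
    unfolding u_def by auto
  define pp where "pp = marginal T Qpre plim"
  have pps: "fsol 0 T Qpre pp" unfolding pp_def marginal_def
    by (rule flow_props(2)[where Q=Qpre and a=0 and b=T, OF T0 cQp])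
  have pp0: "pp 0 = plim" unfolding pp_def marginal_def
    by (rule flow_props(1)[where Q=Qpre and a=0 and b=T, OF T0 cQp])
  define q where "q t x = pp t x * \<phi> t x / Z" for t x
  have qs: "fsol 0 T u q"
    unfolding fsol_def
  proof (intro ballI allI)
    fix t x assume t: "t \<in> {0..T}"
    define Sa where "Sa = (\<Sum>y\<in>UNIV - {x}. Qpre t y x * pp t y)"
    define Sb where "Sb = (\<Sum>y\<in>UNIV - {x}. Qpre t x y)"
    define Sc where "Sc = (\<Sum>y\<in>UNIV - {x}. Qpre t x y * \<phi> t y)"
    have php: "\<And>y. 0 < \<phi> t y" using \<phi>p t by auto
    have d1: "((\<lambda>s. pp s x) has_real_derivative Sa - Sb * pp t x) (at t within {0..T})"
      using pps t unfolding fsol_def Sa_def Sb_def by (simp add: sum_distrib_right)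
    have e2: "(\<Sum>y\<in>UNIV. Qpre t x y * \<phi> t y) = - Sb * \<phi> t x + Sc"
    proof -
      have "(\<Sum>y\<in>UNIV. Qpre t x y * \<phi> t y) = Qpre t x x * \<phi> t x + (\<Sum>y\<in>UNIV - {x}. Qpre t x y * \<phi> t y)"
        by (rule sum.remove) auto
      then show ?thesis using diagp t unfolding Sb_def Sc_def by simp
    qed
    have d2: "((\<lambda>s. \<phi> s x) has_real_derivative - (- Sb * \<phi> t x + Sc)) (at t within {0..T})"
      using \<phi>d t e2 by metis
    have "((\<lambda>s. pp s x * \<phi> s x / Z) has_real_derivative
        ((Sa - Sb * pp t x) * \<phi> t x + - (- Sb * \<phi> t x + Sc) * pp t x) / Z) (at t within {0..T})"
      by (rule DERIV_cdivide[OF DERIV_mult[OF d1 d2]])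
    moreover have "((Sa - Sb * pp t x) * \<phi> t x + - (- Sb * \<phi> t x + Sc) * pp t x) / Z
        = (\<Sum>y\<in>UNIV - {x}. u t y x * q t y) - (\<Sum>y\<in>UNIV - {x}. u t x y * q t x)"
    proof -
      have 1: "(\<Sum>y\<in>UNIV - {x}. u t y x * q t y) = \<phi> t x * Sa / Z"
        unfolding Sa_def sum_distrib_left sum_divide_distrib
      proof (rule sum.cong[OF refl])
        fix y assume "y \<in> UNIV - {x}"
        then have "y \<noteq> x" by auto
        then show "u t y x * q t y = \<phi> t x * (Qpre t y x * pp t y) / Z"
          unfolding u_def q_def using php[of y] by (simp add: field_simps)
      qed
      have 2: "(\<Sum>y\<in>UNIV - {x}. u t x y * q t x) = pp t x * Sc / Z"
        unfolding Sc_def sum_distrib_left sum_divide_distrib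
      proof (rule sum.cong[OF refl])
        fix y assume "y \<in> UNIV - {x}"
        then have "y \<noteq> x" by auto
        then show "u t x y * q t x = pp t x * (Qpre t x y * \<phi> t y) / Z"
          unfolding u_def q_def using php[of x] by (simp add: field_simps)
      qed
      show ?thesis unfolding 1 2 using Zn by (simp add: field_simps)
    qed
    ultimately show "((\<lambda>s. q s x) has_real_derivative
        (\<Sum>y\<in>UNIV - {x}. u t y x * q t y) - (\<Sum>y\<in>UNIV - {x}. u t x y * q t x)) (at t within {0..T})"
      unfolding q_def by simp
  qed
  have q0: "q 0 = \<pi>" unfolding q_def \<pi>_def using pp0 by auto
  have mu: "\<forall>t\<in>{0..T}. marginal T u \<pi> t = q t"
    unfolding marginal_def using flow_props(3)[where Q=u and a=0 and b=T, OF T0 cu] qs q0 by blast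
  have \<pi>0: "0 \<le> \<pi> x" for x unfolding \<pi>_def using plim0[of x] \<phi>0p[of x] Zp by simp
  have \<pi>1: "(\<Sum>x\<in>UNIV. \<pi> x) = 1" unfolding \<pi>_def using Zn by (simp add: sum_divide_distrib[symmetric] Z_def)
  define mU where "mU = marginal T u \<pi>"
  have mUs: "fsol 0 T u mU" unfolding mU_def marginal_def
    by (rule flow_props(2)[where Q=u and a=0 and b=T, OF T0 cu])
  have mU0: "mU 0 = \<pi>" unfolding mU_def marginal_def
    by (rule flow_props(1)[where Q=u and a=0 and b=T, OF T0 cu])
  have DvU: "Dv Qpre u \<phi> t x = 0" for t x
    unfolding Dv_def by (rule sum.neutral) (auto simp: u_def Dfun_self)
  define KU where "KU = (\<Sum>x\<in>UNIV. mU T x * (\<alpha> * ln (\<phi> T x))) - (\<Sum>x\<in>UNIV. mU 0 x * (\<alpha> * ln (\<phi> 0 x)))"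
  have verU: "((\<lambda>t. \<alpha> * (\<Sum>x\<in>UNIV. mU t x * pen Qpre u t x) - \<alpha> * (\<Sum>x\<in>UNIV. mU t x * Dv Qpre u \<phi> t x)) has_integral KU) {0..T}"
    unfolding KU_def by (rule verif[OF T0 ap genp offu acu \<phi>p \<phi>d mUs])
  then have "((\<lambda>t. (1 / \<alpha>) * (\<alpha> * (\<Sum>x\<in>UNIV. mU t x * pen Qpre u t x))) has_integral (1 / \<alpha>) * KU) {0..T}"
    unfolding DvU by (intro has_integral_mult_right) simp
  then have intU: "((\<lambda>t. \<Sum>x\<in>UNIV. mU t x * pen Qpre u t x) has_integral KU / \<alpha>) {0..T}"
    using ap by simp
  have admU: "admissible T Qpre plim u \<pi>"
    unfolding admissible_def
  proof (intro conjI)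
    show "is_generator T u" by (rule genu)
    show "is_distr \<pi>" unfolding is_distr_def using \<pi>0 \<pi>1 by auto
    show "\<forall>x. plim x = 0 \<longrightarrow> \<pi> x = 0" unfolding \<pi>_def by simp
    show "\<forall>t\<in>{0..T}. \<forall>x y. x \<noteq> y \<longrightarrow> Qpre t x y = 0 \<longrightarrow> u t x y = 0" by (rule acu)
    show "(\<lambda>t. \<Sum>x\<in>UNIV. marginal T u \<pi> t x * pen Qpre u t x) integrable_on {0..T}"
      using intU unfolding mU_def by blast
  qed
  have objU: "objective T \<alpha> r Qpre plim u \<pi> = \<alpha> * ln Z"
  proof -
    have "objective T \<alpha> r Qpre plim u \<pi> = (\<Sum>x\<in>UNIV. mU T x * r x) - \<alpha> * (KU / \<alpha> + KL \<pi> plim)"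
      unfolding objective_def mU_def[symmetric] using intU by (simp add: integral_unique)
    also have "\<dots> = \<alpha> * ((\<Sum>x\<in>UNIV. \<pi> x * ln (\<phi> 0 x)) - KL \<pi> plim)"
    proof -
      have e1: "\<alpha> * (KU / \<alpha> + KL \<pi> plim) = KU + \<alpha> * KL \<pi> plim" using ap by (simp add: distrib_left)
      have e2: "(\<Sum>x\<in>UNIV. \<pi> x * (\<alpha> * ln (\<phi> 0 x))) = \<alpha> * (\<Sum>x\<in>UNIV. \<pi> x * ln (\<phi> 0 x))"
        by (simp add: sum_distrib_left mult.left_commute)
      have e3: "KU = (\<Sum>x\<in>UNIV. mU T x * r x) - \<alpha> * (\<Sum>x\<in>UNIV. \<pi> x * ln (\<phi> 0 x))"
        unfolding KU_def lnT mU0 e2 ..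
      show ?thesis by (subst e1, subst e3) (simp add: right_diff_distrib)
    qed
    also have "(\<Sum>x\<in>UNIV. \<pi> x * ln (\<phi> 0 x)) - KL \<pi> plim = ln Z"
      unfolding \<pi>_def Z_def
      by (rule gibbs_eq) (use plim0 \<phi>0p Zp Z_def in auto)
    finally show ?thesis .
  qed
  define m where "m = marginal T Qs P0s"
  have ms: "fsol 0 T Qs m" unfolding m_def marginal_def
    by (rule flow_props(2)[where Q=Qs and a=0 and b=T, OF T0 cQs])
  have m0: "m 0 = P0s" unfolding m_def marginal_def
    by (rule flow_props(1)[where Q=Qs and a=0 and b=T, OF T0 cQs])
  have mnn: "\<forall>t\<in>{0..T}. \<forall>x. 0 \<le> m t x" unfolding m_def marginal_def
    by (rule flow_nonneg[where Q=Qs and a=0 and b=T, OF T0 cQs offS]) (use P00 in auto)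
  define KS where "KS = (\<Sum>x\<in>UNIV. m T x * (\<alpha> * ln (\<phi> T x))) - (\<Sum>x\<in>UNIV. m 0 x * (\<alpha> * ln (\<phi> 0 x)))"
  have verS: "((\<lambda>t. \<alpha> * (\<Sum>x\<in>UNIV. m t x * pen Qpre Qs t x) - \<alpha> * (\<Sum>x\<in>UNIV. m t x * Dv Qpre Qs \<phi> t x)) has_integral KS) {0..T}"
    unfolding KS_def by (rule verif[OF T0 ap genp offS acQ \<phi>p \<phi>d ms])
  define G where "G = integral {0..T} (\<lambda>t. \<Sum>x\<in>UNIV. m t x * pen Qpre Qs t x)"
  have intG: "((\<lambda>t. \<Sum>x\<in>UNIV. m t x * pen Qpre Qs t x) has_integral G) {0..T}"
    unfolding G_def m_def using intS by (simp add: integrable_integral)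
  define I where "I = (\<alpha> * G - KS) / \<alpha>"
  have intI: "((\<lambda>t. \<Sum>x\<in>UNIV. m t x * Dv Qpre Qs \<phi> t x) has_integral I) {0..T}"
  proof -
    have "((\<lambda>t. \<alpha> * (\<Sum>x\<in>UNIV. m t x * pen Qpre Qs t x) - (\<alpha> * (\<Sum>x\<in>UNIV. m t x * pen Qpre Qs t x) - \<alpha> * (\<Sum>x\<in>UNIV. m t x * Dv Qpre Qs \<phi> t x)))
        has_integral \<alpha> * G - KS) {0..T}"
      by (intro has_integral_diff has_integral_mult_right intG verS)
    then have "((\<lambda>t. (1 / \<alpha>) * (\<alpha> * (\<Sum>x\<in>UNIV. m t x * Dv Qpre Qs \<phi> t x))) has_integral (1 / \<alpha>) * (\<alpha> * G - KS)) {0..T}"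
      by (intro has_integral_mult_right) simp
    then show ?thesis unfolding I_def using ap by simp
  qed
  have Dvnn: "0 \<le> Dv Qpre Qs \<phi> t x" if t: "t \<in> {0..T}" for t x
    using offS offp acQ \<phi>p t by (intro Dv_nonneg) auto
  have I0: "0 \<le> I"
  proof (rule has_integral_nonneg[OF intI])
    fix t assume t: "t \<in> {0..T}"
    show "0 \<le> (\<Sum>x\<in>UNIV. m t x * Dv Qpre Qs \<phi> t x)"
      by (intro sum_nonneg mult_nonneg_nonneg) (use mnn Dvnn t in auto)
  qed
  have objS: "objective T \<alpha> r Qpre plim Qs P0s = \<alpha> * ((\<Sum>x\<in>UNIV. P0s x * ln (\<phi> 0 x)) - KL P0s plim) - \<alpha> * I"
  proof -
    have "objective T \<alpha> r Qpre plim Qs P0s = (\<Sum>x\<in>UNIV. m T x * r x) - \<alpha> * (G + KL P0s plim)"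
      unfolding objective_def m_def[symmetric] G_def ..
    also have "\<dots> = \<alpha> * ((\<Sum>x\<in>UNIV. P0s x * ln (\<phi> 0 x)) - KL P0s plim) - \<alpha> * I"
    proof -
      have e1: "\<alpha> * G = KS + \<alpha> * I" unfolding I_def using ap by simp
      have e2: "(\<Sum>x\<in>UNIV. P0s x * (\<alpha> * ln (\<phi> 0 x))) = \<alpha> * (\<Sum>x\<in>UNIV. P0s x * ln (\<phi> 0 x))"
        by (simp add: sum_distrib_left mult.left_commute)
      have e3: "KS = (\<Sum>x\<in>UNIV. m T x * r x) - \<alpha> * (\<Sum>x\<in>UNIV. P0s x * ln (\<phi> 0 x))"
        unfolding KS_def lnT m0 e2 ..
      have "\<alpha> * (G + KL P0s plim) = KS + \<alpha> * I + \<alpha> * KL P0s plim" using e1 by (simp add: distrib_left)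
      then show ?thesis unfolding e3 by (simp add: right_diff_distrib)
    qed
    finally show ?thesis .
  qed
  have gib1: "(\<Sum>x\<in>UNIV. P0s x * ln (\<phi> 0 x)) - KL P0s plim \<le> ln Z"
    unfolding Z_def by (rule gibbs(1)) (use dP0 plim0 \<phi>0p acP Zp Z_def in auto)
  have "objective T \<alpha> r Qpre plim u \<pi> \<le> objective T \<alpha> r Qpre plim Qs P0s"
    using opt admU by blast
  then have ineq: "\<alpha> * ln Z \<le> \<alpha> * ((\<Sum>x\<in>UNIV. P0s x * ln (\<phi> 0 x)) - KL P0s plim) - \<alpha> * I"
    unfolding objU objS .
  have "\<alpha> * ((\<Sum>x\<in>UNIV. P0s x * ln (\<phi> 0 x)) - KL P0s plim) \<le> \<alpha> * ln Z"
    using gib1 ap by simp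
  then have "\<alpha> * I \<le> 0" using ineq by linarith
  then have "I \<le> 0" using ap mult_le_cancel_left_pos[of \<alpha> I 0] by simp
  then have Iz: "I = 0" using I0 by simp
  have "\<alpha> * ln Z \<le> \<alpha> * ((\<Sum>x\<in>UNIV. P0s x * ln (\<phi> 0 x)) - KL P0s plim)" using ineq Iz by simp
  then have "ln Z \<le> (\<Sum>x\<in>UNIV. P0s x * ln (\<phi> 0 x)) - KL P0s plim"
    using ap mult_le_cancel_left_pos by blast
  then have Xeq: "(\<Sum>x\<in>UNIV. P0s x * ln (\<phi> 0 x)) - KL P0s plim = ln (\<Sum>x\<in>UNIV. plim x * \<phi> 0 x)"
    using gib1 unfolding Z_def by linarith
  have c0': "\<forall>x. 0 \<le> plim x" using plim0 by blast
  have f0': "\<forall>x. 0 < \<phi> 0 x" using \<phi>0p by blast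
  have Z0': "0 < (\<Sum>x\<in>UNIV. plim x * \<phi> 0 x)" using Zp unfolding Z_def .
  have "\<forall>x. P0s x = plim x * \<phi> 0 x / (\<Sum>y\<in>UNIV. plim y * \<phi> 0 y)"
    by (rule gibbs(2)[OF dP0 c0' f0' acP Z0' Xeq])
  then have P0eq: "\<forall>x. P0s x = \<pi> x" unfolding \<pi>_def Z_def .
  \<comment> \<open>Step 7: the maximiser agrees with u on the support of its marginal\<close>
  have int0: "((\<lambda>t. \<Sum>x\<in>UNIV. m t x * Dv Qpre Qs \<phi> t x) has_integral 0) {0..T}"
    using intI Iz by simp
  have Snn: "0 \<le> (\<Sum>x\<in>UNIV. m t x * Dv Qpre Qs \<phi> t x)" if t: "t \<in> {0..T}" for t
    by (intro sum_nonneg mult_nonneg_nonneg) (use mnn Dvnn t in auto)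
  define N where "N = {t \<in> {0..T}. (\<Sum>x\<in>UNIV. m t x * Dv Qpre Qs \<phi> t x) \<noteq> 0}"
  have negN: "negligible N" unfolding N_def
    by (rule nonneg_int0_negligible[OF int0 Snn])
  have zeroN: "(\<Sum>x\<in>UNIV. m t x * Dv Qpre Qs \<phi> t x) = 0" if t: "t \<in> {0..T} - N" for t
    using t unfolding N_def by auto
  have cm: "continuous_on {0..T} (\<lambda>t. m t x)" for x
    unfolding continuous_on_eq_continuous_within using ms DERIV_continuous unfolding fsol_def by blast
  have Qeq: "m t x * Qs t x y = m t x * u t x y" if t: "t \<in> {0..T}" and xy: "x \<noteq> y" for t x y
  proof -
    have "\<forall>t\<in>{0..T}. m t x * (Qs t x y - u t x y) = 0"
    proof (rule cont_ae_zero[OF Tp _ negN])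
      show "continuous_on {0..T} (\<lambda>t. m t x * (Qs t x y - u t x y))"
        by (intro continuous_intros cm cQs cu)
      fix t assume t: "t \<in> {0..T} - N"
      then have t0: "t \<in> {0..T}" by auto
      have "m t x * Dv Qpre Qs \<phi> t x = 0"
        using zeroN[OF t] sum_nonneg_eq_0_iff[of UNIV "\<lambda>x. m t x * Dv Qpre Qs \<phi> t x"] mnn Dvnn t0 by auto
      then consider "m t x = 0" | "Dv Qpre Qs \<phi> t x = 0" by auto
      then show "m t x * (Qs t x y - u t x y) = 0"
      proof cases
        case 1 then show ?thesis by simp
      next
        case 2
        have dnn: "0 \<le> Dfun (Qs t x z) (Qpre t x z * \<phi> t z / \<phi> t x)" if z: "z \<in> UNIV - {x}" for z
        proof (rule Dfun_nonneg)
          have zx: "x \<noteq> z" using z by auto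
          have p1: "0 < \<phi> t x" "0 < \<phi> t z" using \<phi>p t0 by auto
          show "0 \<le> Qs t x z" using offS zx t0 by auto
          have "0 \<le> Qpre t x z" using offp zx t0 by auto
          then show "0 \<le> Qpre t x z * \<phi> t z / \<phi> t x" using p1 by simp
          show "Qpre t x z * \<phi> t z / \<phi> t x = 0 \<longrightarrow> Qs t x z = 0" using p1 acQ zx t0 by simp
        qed
        have "Dfun (Qs t x y) (Qpre t x y * \<phi> t y / \<phi> t x) = 0"
          using 2 sum_nonneg_eq_0_iff[of "UNIV - {x}" "\<lambda>z. Dfun (Qs t x z) (Qpre t x z * \<phi> t z / \<phi> t x)"] dnn xy
          unfolding Dv_def by auto
        then have "Qs t x y = Qpre t x y * \<phi> t y / \<phi> t x"
        proof (rule Dfun_zero[rotated 3])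
          have p1: "0 < \<phi> t x" "0 < \<phi> t y" using \<phi>p t0 by auto
          show "0 \<le> Qs t x y" using offS xy t0 by auto
          have "0 \<le> Qpre t x y" using offp xy t0 by auto
          then show "0 \<le> Qpre t x y * \<phi> t y / \<phi> t x" using p1 by simp
          show "Qpre t x y * \<phi> t y / \<phi> t x = 0 \<longrightarrow> Qs t x y = 0" using p1 acQ xy t0 by simp
        qed
        then show ?thesis unfolding u_def using xy by simp
      qed
    qed
    then show ?thesis using t by (simp add: right_diff_distrib)
  qed
  have mfu: "fsol 0 T u m"
    unfolding fsol_def
  proof (intro ballI allI)
    fix t x assume t: "t \<in> {0..T}"
    have "((\<lambda>s. m s x) has_real_derivative
        (\<Sum>y\<in>UNIV - {x}. Qs t y x * m t y) - (\<Sum>y\<in>UNIV - {x}. Qs t x y * m t x)) (at t within {0..T})"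
      using ms t unfolding fsol_def by blast
    moreover have "(\<Sum>y\<in>UNIV - {x}. Qs t y x * m t y) = (\<Sum>y\<in>UNIV - {x}. u t y x * m t y)"
      by (rule sum.cong[OF refl]) (use Qeq t in \<open>auto simp: mult.commute\<close>)
    moreover have "(\<Sum>y\<in>UNIV - {x}. Qs t x y * m t x) = (\<Sum>y\<in>UNIV - {x}. u t x y * m t x)"
      by (rule sum.cong[OF refl]) (use Qeq t in \<open>auto simp: mult.commute\<close>)
    ultimately show "((\<lambda>s. m s x) has_real_derivative
        (\<Sum>y\<in>UNIV - {x}. u t y x * m t y) - (\<Sum>y\<in>UNIV - {x}. u t x y * m t x)) (at t within {0..T})"
      by simp
  qed
  have m0\<pi>: "m 0 = \<pi>" using m0 P0eq by auto
  have mq: "m T = q T"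
  proof -
    have "\<forall>t\<in>{0..T}. marginal T u \<pi> t = m t"
      unfolding marginal_def using flow_props(3)[where Q=u and a=0 and b=T, OF T0 cu] mfu m0\<pi> by blast
    then show ?thesis using mu T0 by auto
  qed
  have sumq: "(\<Sum>x\<in>UNIV. q T x) = 1"
    using mass_const[OF T0 qs] q0 \<pi>1 by simp
  have Zeq: "(\<Sum>y\<in>UNIV. exp (r y / \<alpha>) * pp T y) = Z"
  proof -
    have "(\<Sum>x\<in>UNIV. q T x) = (\<Sum>y\<in>UNIV. exp (r y / \<alpha>) * pp T y) / Z"
      unfolding q_def \<phi>T' by (simp add: sum_divide_distrib mult.commute)
    then show ?thesis using sumq Zn by (simp add: field_simps)
  qed
  have part2: "\<forall>x. marginal T Qs P0s T x = exp (r x / \<alpha>) * marginal T Qpre plim T x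
                 / (\<Sum>y\<in>UNIV. exp (r y / \<alpha>) * marginal T Qpre plim T y)"
  proof
    fix x
    have "marginal T Qs P0s T x = q T x" using mq unfolding m_def by simp
    also have "\<dots> = exp (r x / \<alpha>) * pp T x / (\<Sum>y\<in>UNIV. exp (r y / \<alpha>) * pp T y)"
      unfolding q_def Zeq \<phi>T' by (simp add: mult.commute)
    finally show "marginal T Qs P0s T x = exp (r x / \<alpha>) * marginal T Qpre plim T x
                 / (\<Sum>y\<in>UNIV. exp (r y / \<alpha>) * marginal T Qpre plim T y)" unfolding pp_def .
  qed
  define \<tau> where "\<tau> x = flow 0 T Qs (\<lambda>z. if z = x then 1 else 0)" for x
  have \<tau>s: "fsol 0 T Qs (\<tau> x)" for x unfolding \<tau>_def
    by (rule flow_props(2)[where Q=Qs and a=0 and b=T, OF T0 cQs])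
  have \<tau>0: "\<tau> x 0 = (\<lambda>z. if z = x then 1 else 0)" for x unfolding \<tau>_def
    by (rule flow_props(1)[where Q=Qs and a=0 and b=T, OF T0 cQs])
  have \<tau>nn: "\<forall>t\<in>{0..T}. \<forall>z. 0 \<le> \<tau> x t z" for x unfolding \<tau>_def
    by (rule flow_nonneg[where Q=Qs and a=0 and b=T, OF T0 cQs offS]) auto
  have mlin: "\<forall>t\<in>{0..T}. m t = (\<lambda>z. \<Sum>w\<in>UNIV. P0s w * \<tau> w t z)"
    unfolding m_def marginal_def \<tau>_def by (rule flow_lin[where Q=Qs and a=0 and b=T, OF T0 cQs])
  have vf: "value_fn T \<alpha> r Qpre Qs 0 x = \<alpha> * ln (\<phi> 0 x)" if px: "plim x \<noteq> 0" for x
  proof -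
    have P0p: "0 < P0s x" using P0eq px plim0[of x] \<phi>0p[of x] Zp unfolding \<pi>_def
      by (simp add: less_le)
    have le: "P0s x * \<tau> x t z \<le> m t z" if t: "t \<in> {0..T}" for t z
    proof -
      have "P0s x * \<tau> x t z \<le> (\<Sum>w\<in>UNIV. P0s w * \<tau> w t z)"
        by (rule member_le_sum[where f="\<lambda>w. P0s w * \<tau> w t z"]) (use P00 \<tau>nn t in auto)
      then show ?thesis using mlin t by simp
    qed
    have z\<tau>: "(\<Sum>z\<in>UNIV. \<tau> x t z * Dv Qpre Qs \<phi> t z) = 0" if t: "t \<in> {0..T} - N" for t
    proof -
      have t0: "t \<in> {0..T}" using t by auto
      have "P0s x * (\<Sum>z\<in>UNIV. \<tau> x t z * Dv Qpre Qs \<phi> t z) = (\<Sum>z\<in>UNIV. (P0s x * \<tau> x t z) * Dv Qpre Qs \<phi> t z)"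
        by (simp add: sum_distrib_left mult.assoc)
      also have "\<dots> \<le> (\<Sum>z\<in>UNIV. m t z * Dv Qpre Qs \<phi> t z)"
        by (intro sum_mono mult_right_mono le t0 Dvnn)
      also have "\<dots> = 0" by (rule zeroN[OF t])
      finally have 1: "P0s x * (\<Sum>z\<in>UNIV. \<tau> x t z * Dv Qpre Qs \<phi> t z) \<le> 0" .
      have 2: "0 \<le> (\<Sum>z\<in>UNIV. \<tau> x t z * Dv Qpre Qs \<phi> t z)"
        by (intro sum_nonneg mult_nonneg_nonneg) (use \<tau>nn Dvnn t0 in auto)
      show ?thesis using 1 2 P0p by (simp add: mult_le_0_iff)
    qed
    have intD: "((\<lambda>t. \<Sum>z\<in>UNIV. \<tau> x t z * Dv Qpre Qs \<phi> t z) has_integral 0) {0..T}"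
      by (rule has_integral_spike[OF negN, where f="\<lambda>_. 0"]) (use z\<tau> in auto)
    define Kx where "Kx = (\<Sum>z\<in>UNIV. \<tau> x T z * (\<alpha> * ln (\<phi> T z))) - (\<Sum>z\<in>UNIV. \<tau> x 0 z * (\<alpha> * ln (\<phi> 0 z)))"
    have ver: "((\<lambda>t. \<alpha> * (\<Sum>z\<in>UNIV. \<tau> x t z * pen Qpre Qs t z) - \<alpha> * (\<Sum>z\<in>UNIV. \<tau> x t z * Dv Qpre Qs \<phi> t z)) has_integral Kx) {0..T}"
      unfolding Kx_def by (rule verif[OF T0 ap genp offS acQ \<phi>p \<phi>d \<tau>s])
    have "((\<lambda>t. (\<alpha> * (\<Sum>z\<in>UNIV. \<tau> x t z * pen Qpre Qs t z) - \<alpha> * (\<Sum>z\<in>UNIV. \<tau> x t z * Dv Qpre Qs \<phi> t z))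
               + \<alpha> * (\<Sum>z\<in>UNIV. \<tau> x t z * Dv Qpre Qs \<phi> t z)) has_integral Kx + \<alpha> * 0) {0..T}"
      by (intro has_integral_add ver has_integral_mult_right intD)
    then have "((\<lambda>t. (1 / \<alpha>) * (\<alpha> * (\<Sum>z\<in>UNIV. \<tau> x t z * pen Qpre Qs t z))) has_integral (1 / \<alpha>) * Kx) {0..T}"
      by (intro has_integral_mult_right) simp
    then have "((\<lambda>t. \<Sum>z\<in>UNIV. \<tau> x t z * pen Qpre Qs t z) has_integral Kx / \<alpha>) {0..T}"
      using ap by simp
    then have iv: "integral {0..T} (\<lambda>t. \<Sum>z\<in>UNIV. \<tau> x t z * pen Qpre Qs t z) = Kx / \<alpha>"
      by (rule integral_unique)
    have Kx2: "Kx = (\<Sum>z\<in>UNIV. \<tau> x T z * r z) - \<alpha> * ln (\<phi> 0 x)"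
    proof -
      have "(\<Sum>z\<in>UNIV. \<tau> x 0 z * (\<alpha> * ln (\<phi> 0 z))) = (\<Sum>z\<in>UNIV. if z = x then \<alpha> * ln (\<phi> 0 x) else 0)"
        unfolding \<tau>0 by (rule sum.cong) auto
      also have "\<dots> = \<alpha> * ln (\<phi> 0 x)" by simp
      finally show ?thesis unfolding Kx_def lnT by simp
    qed
    have "value_fn T \<alpha> r Qpre Qs 0 x = (\<Sum>z\<in>UNIV. \<tau> x T z * r z) - \<alpha> * (Kx / \<alpha>)"
      unfolding value_fn_def trans_def \<tau>_def[symmetric] using iv by simp
    also have "\<dots> = \<alpha> * ln (\<phi> 0 x)" unfolding Kx2 using ap by simp
    finally show ?thesis .
  qed
  have ev: "exp (value_fn T \<alpha> r Qpre Qs 0 y / \<alpha>) * plim y = plim y * \<phi> 0 y" for y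
  proof (cases "plim y = 0")
    case True then show ?thesis by simp
  next
    case False
    then show ?thesis using vf[OF False] ap \<phi>0p[of y] by simp
  qed
  have part1: "\<forall>x. P0s x = exp (value_fn T \<alpha> r Qpre Qs 0 x / \<alpha>) * plim x
                 / (\<Sum>y\<in>UNIV. exp (value_fn T \<alpha> r Qpre Qs 0 y / \<alpha>) * plim y)"
    unfolding ev using P0eq unfolding \<pi>_def Z_def by simp
  show ?thesis using part1 part2 by blast
qed


end
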